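(* Let $f:\mathbb{R}^n\to\mathbb{R}$ and $c:\mathbb{R}^n\to\mathbb{R}^m$, and let $\{x_k\}$, $\{d_k\}$, $\{y_k\}$ be generated by either Algorithm 1 or Algorithm 2 (described in the context) applied to $\min_x f(x)$ subject to $c(x)=0$. Suppose the Standing Assumption and the Matrix Assumption of the context hold, and that the algorithm does not terminate finitely. Then $$\lim_{k\to\infty}\|d_k\|_2=0,\qquad \lim_{k\to\infty}\|c_k\|_2=0,\qquad \lim_{k\to\infty}\|g_k+J_k^Ty_k\|_2=0.$$
   Context: Notation: $g_k=\nabla f(x_k)$, $c_k=c(x_k)$, $J_k=\nabla c(x_k)^T\in\mathbb{R}^{m\times n}$. Merit function $\phi(x,\tau)=\tau f(x)+\|c(x)\|_1$ for $\tau>0$. Model reduction: $\Delta q(x,\tau,g,H,d)=-\tau\big(g^Td+\tfrac12\max\{d^THd,0\}\big)+\|c(x)\|_1$. Matrix Assumption: $\{H_k\}$ are symmetric $n\times n$ matrices with $\|H_k\|_2\le\kappa_H$ and $u^TH_ku\ge\zeta\|u\|_2^2$ for all $u$ with $J_ku=0$, for constants $\kappa_H,\zeta>0$. Common iteration ($k=0,1,\dots$): $(d_k,y_k)$ solves $H_kd_k+J_k^Ty_k=-g_k$, $J_kd_k=-c_k$. If $g_k+J_k^Ty_k=0$ and $c_k=0$, stop. Otherwise set $\tau_k^{trial}=\infty$ if $g_k^Td_k+\max\{d_k^TH_kd_k,0\}\le0$ and $\tau_k^{trial}=\frac{(1-\sigma)\|c_k\|_1}{g_k^Td_k+\max\{d_k^TH_kd_k,0\}}$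 otherwise; set $\tau_k=\tau_{k-1}$ if $\tau_{k-1}\le\tau_k^{trial}$ and $\tau_k=(1-\epsilon)\tau_k^{trial}$ otherwise. Then choose $\alpha_k>0$ and set $x_{k+1}=x_k+\alpha_kd_k$. The sufficient decrease condition for a trial stepsize $\alpha$ is (SD): $\phi(x_k+\alpha d_k,\tau_k)\le\phi(x_k,\tau_k)-\eta\alpha\,\Delta q(x_k,\tau_k,g_k,H_k,d_k)$. Algorithm 1 (inputs $x_0$, $\tau_{-1}>0$, $\epsilon,\sigma,\eta\in(0,1)$, $\rho>1$, $L_{-1}>0$, $\gamma_{-1,i}>0$ for $i=1,\dots,m$): choose $L_{k,0}\in(0,L_{k-1}]$ and $\gamma_{k,i,0}\in(0,\gamma_{k-1,i}]$. For $j=0,1,\dots$: with $\Lambda_{k,j}=\tau_kL_{k,j}+\sum_i\gamma_{k,i,j}$, set $\widehat\alpha_{k,j}=\frac{2(1-\eta)\Delta q(x_k,\tau_k,g_k,H_k,d_k)}{\Lambda_{k,j}\|d_k\|_2^2}$, $\widetilde\alpha_{k,j}=\widehat\alpha_{k,j}-\frac{4\|c_k\|_1}{\Lambda_{k,j}\|d_k\|_2^2}$, and $\alpha_{k,j}=\widehat\alpha_{k,j}$ if $\widehat\alpha_{k,j}<1$, $\alpha_{k,j}=1$ if $\widetilde\alpha_{k,j}\le1\le\widehat\alpha_{k,j}$, $\alpha_{k,j}=\widetilde\alpha_{k,j}$ if $\widetilde\alpha_{k,j}>1$. Let (LF) be $f(x_k+\alpha_{k,j}d_k)\le f(x_k)+\alpha_{k,j}g_k^Td_k+\tfrac12L_{k,j}\alpha_{k,j}^2\|d_k\|_2^2$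 and (LC$_i$) be $|c_i(x_k+\alpha_{k,j}d_k)|\le|c_i(x_k)+\alpha_{k,j}\nabla c_i(x_k)^Td_k|+\tfrac12\gamma_{k,i,j}\alpha_{k,j}^2\|d_k\|_2^2$. If (SD) holds with $\alpha=\alpha_{k,j}$, or (LF) and all (LC$_i$) hold, set $L_k=L_{k,j}$, $\gamma_{k,i}=\gamma_{k,i,j}$, $\alpha_k=\alpha_{k,j}$ and end the inner loop; otherwise set $L_{k,j+1}=\rho L_{k,j}$ if (LF) fails (else $L_{k,j}$), and $\gamma_{k,i,j+1}=\rho\gamma_{k,i,j}$ if (LC$_i$) fails (else $\gamma_{k,i,j}$). Algorithm 2 (inputs $x_0$, $\tau_{-1}>0$, $\epsilon,\sigma,\eta,\nu\in(0,1)$, $\alpha>0$): $\alpha_k=\alpha_{k,j}=\nu^j\alpha$ for the smallest $j\in\{0,1,\dots\}$ such that (SD) holds with $\alpha=\alpha_{k,j}$. Standing Assumption: there is an open convex set $\mathcal X\subseteq\mathbb{R}^n$ containing all iterates $x_k$ and all trial points $x_k+\alpha_{k,j}d_k$; $f$ is continuously differentiable and bounded below on $\mathcal X$; $\nabla f$ is bounded and Lipschitz with constant $L$ on $\mathcal X$; $c$ and $\nabla c^T$ are bounded on $\mathcal X$; each $\nabla c_i$ is Lipschitz with constant $\gamma_i$ on $\mathcal X$; the singular values of $\nabla c(x)^T$ are bounded away from zero uniformly over $x\in\mathcal X$. *)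

theory Defs
  imports "HOL-Analysis.Analysis"
begin

text \<open>Vectors in R^n are real^'n, vectors in R^m are real^'m; the Jacobian
  J(x) = (nabla c(x))^T is an m x n matrix real^'n^'m whose i-th row is nabla c_i(x).\<close>

definition l1norm :: "real^'m \<Rightarrow> real" where
  "l1norm v = (\<Sum>i\<in>UNIV. \<bar>v $ i\<bar>)"

definition merit :: "(real^'n \<Rightarrow> real) \<Rightarrow> (real^'n \<Rightarrow> real^'m) \<Rightarrow> real \<Rightarrow> real^'n \<Rightarrow> real" where
  "merit f c \<tau> x = \<tau> * f x + l1norm (c x)"

definition model_red :: "(real^'n \<Rightarrow> real^'m) \<Rightarrow> real^'n \<Rightarrow> real \<Rightarrow> real^'n \<Rightarrow> real^'n^'n \<Rightarrow> real^'n \<Rightarrow> real" where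
  "model_red c x \<tau> gv Hm dv = - \<tau> * (gv \<bullet> dv + 1/2 * max (dv \<bullet> (Hm *v dv)) 0) + l1norm (c x)"

definition suff_dec :: "(real^'n \<Rightarrow> real) \<Rightarrow> (real^'n \<Rightarrow> real^'m) \<Rightarrow> real \<Rightarrow> real \<Rightarrow> real^'n \<Rightarrow> real^'n
    \<Rightarrow> real^'n^'n \<Rightarrow> real^'n \<Rightarrow> real \<Rightarrow> bool" where
  "suff_dec f c \<eta> \<tau> xk gk Hk dk \<alpha> \<longleftrightarrow>
     merit f c \<tau> (xk + \<alpha> *\<^sub>R dk) \<le> merit f c \<tau> xk - \<eta> * \<alpha> * model_red c xk \<tau> gk Hk dk"

text \<open>Merit parameter update: tau_k from tau_{k-1}. The case tau_trial = infinity
  (denominator \<le> 0) is handled by keeping tau_{k-1}.\<close>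
definition tau_update :: "real \<Rightarrow> real \<Rightarrow> real \<Rightarrow> real \<Rightarrow> real \<Rightarrow> real \<Rightarrow> real" where
  "tau_update \<epsilon> \<sigma> \<tau>prev cl1 gd dHd =
     (let den = gd + max dHd 0 in
      if den \<le> 0 then \<tau>prev
      else if \<tau>prev \<le> (1 - \<sigma>) * cl1 / den then \<tau>prev
      else (1 - \<epsilon>) * ((1 - \<sigma>) * cl1 / den))"

text \<open>Common iteration (outer loop), with x_{k+1} = x_k + alpha_k d_k, alpha_k > 0,
  and the non-termination of the algorithm.\<close>
definition sqp_common ::
  "(real^'n \<Rightarrow> real^'n) \<Rightarrow> (real^'n \<Rightarrow> real^'m) \<Rightarrow> (real^'n \<Rightarrow> real^'n^'m)
   \<Rightarrow> (nat \<Rightarrow> real^'n^'n) \<Rightarrow> (nat \<Rightarrow> real^'n) \<Rightarrow> (nat \<Rightarrow> real^'n) \<Rightarrow> (nat \<Rightarrow> real^'m)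
   \<Rightarrow> (nat \<Rightarrow> real) \<Rightarrow> (nat \<Rightarrow> real) \<Rightarrow> real \<Rightarrow> real \<Rightarrow> real \<Rightarrow> bool" where
  "sqp_common g c J H x d y \<tau> \<alpha> \<tau>init \<epsilon> \<sigma> \<longleftrightarrow>
     (\<forall>k. H k *v d k + transpose (J (x k)) *v y k = - g (x k)
        \<and> J (x k) *v d k = - c (x k)
        \<and> \<not> (g (x k) + transpose (J (x k)) *v y k = 0 \<and> c (x k) = 0)
        \<and> \<tau> k = tau_update \<epsilon> \<sigma> (if k = 0 then \<tau>init else \<tau> (k - 1))
                   (l1norm (c (x k))) (g (x k) \<bullet> d k) (d k \<bullet> (H k *v d k))
        \<and> 0 < \<alpha> k
        \<and> x (Suc k) = x k + \<alpha> k *\<^sub>R d k)"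

definition alg1_alpha :: "real \<Rightarrow> real \<Rightarrow> real \<Rightarrow> real \<Rightarrow> real \<Rightarrow> real" where
  "alg1_alpha \<eta> dq cl1 \<Lambda> nd2 =
     (let ah = 2 * (1 - \<eta>) * dq / (\<Lambda> * nd2);
          atl = ah - 4 * cl1 / (\<Lambda> * nd2)
      in if ah < 1 then ah else if atl \<le> 1 then 1 else atl)"

definition alg1_step ::
  "real \<Rightarrow> (real^'n \<Rightarrow> real^'n) \<Rightarrow> (real^'n \<Rightarrow> real^'m) \<Rightarrow> (nat \<Rightarrow> real^'n^'n)
   \<Rightarrow> (nat \<Rightarrow> real^'n) \<Rightarrow> (nat \<Rightarrow> real^'n) \<Rightarrow> (nat \<Rightarrow> real)
   \<Rightarrow> (nat \<Rightarrow> nat \<Rightarrow> real) \<Rightarrow> (nat \<Rightarrow> nat \<Rightarrow> 'm \<Rightarrow> real) \<Rightarrow> nat \<Rightarrow> nat \<Rightarrow> real" where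
  "alg1_step \<eta> g c H x d \<tau> Lk Gk k j =
     alg1_alpha \<eta> (model_red c (x k) (\<tau> k) (g (x k)) (H k) (d k)) (l1norm (c (x k)))
       (\<tau> k * Lk k j + (\<Sum>i\<in>UNIV. Gk k j i)) (norm (d k) ^ 2)"

text \<open>Algorithm 1 inner loop: Lk k j = L_{k,j}, Gk k j i = gamma_{k,i,j}, the inner loop
  of iteration k terminates at index jk k.\<close>
definition alg1 ::
  "(real^'n \<Rightarrow> real) \<Rightarrow> (real^'n \<Rightarrow> real^'n) \<Rightarrow> (real^'n \<Rightarrow> real^'m) \<Rightarrow> (real^'n \<Rightarrow> real^'n^'m)
   \<Rightarrow> (nat \<Rightarrow> real^'n^'n) \<Rightarrow> (nat \<Rightarrow> real^'n) \<Rightarrow> (nat \<Rightarrow> real^'n)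
   \<Rightarrow> (nat \<Rightarrow> real) \<Rightarrow> (nat \<Rightarrow> real) \<Rightarrow> real \<Rightarrow> real \<Rightarrow> real \<Rightarrow> ('m \<Rightarrow> real)
   \<Rightarrow> (nat \<Rightarrow> nat \<Rightarrow> real) \<Rightarrow> (nat \<Rightarrow> nat \<Rightarrow> 'm \<Rightarrow> real) \<Rightarrow> (nat \<Rightarrow> nat) \<Rightarrow> bool" where
  "alg1 f g c J H x d \<tau> \<alpha> \<eta> \<rho> Linit Ginit Lk Gk jk \<longleftrightarrow>
     (\<forall>k.
       (let a = alg1_step \<eta> g c H x d \<tau> Lk Gk k;
            LF = (\<lambda>j. f (x k + a j *\<^sub>R d k) \<le> f (x k) + a j * (g (x k) \<bullet> d k)
                         + 1/2 * Lk k j * (a j)^2 * (norm (d k))^2);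
            LC = (\<lambda>j i. \<bar>c (x k + a j *\<^sub>R d k) $ i\<bar> \<le> \<bar>c (x k) $ i + a j * ((J (x k) *v d k) $ i)\<bar>
                         + 1/2 * Gk k j i * (a j)^2 * (norm (d k))^2);
            acc = (\<lambda>j. suff_dec f c \<eta> (\<tau> k) (x k) (g (x k)) (H k) (d k) (a j)
                        \<or> (LF j \<and> (\<forall>i. LC j i)))
        in 0 < Lk k 0 \<and> Lk k 0 \<le> (if k = 0 then Linit else Lk (k - 1) (jk (k - 1)))
         \<and> (\<forall>i. 0 < Gk k 0 i \<and> Gk k 0 i \<le> (if k = 0 then Ginit i else Gk (k - 1) (jk (k - 1)) i))
         \<and> (\<forall>j < jk k. \<not> acc j
              \<and> Lk k (Suc j) = (if LF j then Lk k j else \<rho> * Lk k j)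
              \<and> (\<forall>i. Gk k (Suc j) i = (if LC j i then Gk k j i else \<rho> * Gk k j i)))
         \<and> acc (jk k)
         \<and> \<alpha> k = a (jk k)))"

definition alg2 ::
  "(real^'n \<Rightarrow> real) \<Rightarrow> (real^'n \<Rightarrow> real^'n) \<Rightarrow> (real^'n \<Rightarrow> real^'m)
   \<Rightarrow> (nat \<Rightarrow> real^'n^'n) \<Rightarrow> (nat \<Rightarrow> real^'n) \<Rightarrow> (nat \<Rightarrow> real^'n)
   \<Rightarrow> (nat \<Rightarrow> real) \<Rightarrow> (nat \<Rightarrow> real) \<Rightarrow> real \<Rightarrow> real \<Rightarrow> real \<Rightarrow> bool" where
  "alg2 f g c H x d \<tau> \<alpha> \<eta> \<nu> \<alpha>0 \<longleftrightarrow>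
     (\<forall>k. \<exists>j. \<alpha> k = \<nu> ^ j * \<alpha>0
        \<and> suff_dec f c \<eta> (\<tau> k) (x k) (g (x k)) (H k) (d k) (\<nu> ^ j * \<alpha>0)
        \<and> (\<forall>i < j. \<not> suff_dec f c \<eta> (\<tau> k) (x k) (g (x k)) (H k) (d k) (\<nu> ^ i * \<alpha>0)))"

text \<open>Singular values of the m x n matrix A (m \<le> n) uniformly bounded below by kappa:
  every singular value sigma_i(A) \<ge> kappa, i.e. sigma_min(A) = min_{|v|=1} |A^T v| \<ge> kappa.\<close>
definition sing_vals_ge :: "real \<Rightarrow> real^'n^'m \<Rightarrow> bool" where
  "sing_vals_ge \<kappa> A \<longleftrightarrow> (\<forall>v. \<kappa> * norm v \<le> norm (transpose A *v v))"

end

theory Submission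
  imports Defs
begin

lemma tr_inner: "(transpose (A::real^'n^'m) *v w) \<bullet> y = w \<bullet> (A *v y)"
  by (metis dot_lmul_matrix vector_transpose_matrix transpose_transpose)

lemma decomp:
  fixes A :: "real^'n^'m"
  assumes "0 < \<kappa>" "sing_vals_ge \<kappa> A"
  obtains u v where "d = u + v" "A *v u = 0" "\<kappa> * norm v \<le> norm (A *v d)"
proof -
  let ?S = "range (\<lambda>w. transpose A *v w)"
  have sub: "subspace ?S"
    by (rule linear_subspace_image[OF matrix_vector_mul_linear subspace_UNIV])
  obtain v u where v: "v \<in> span ?S" and u: "\<And>w. w \<in> span ?S \<Longrightarrow> orthogonal u w" and d: "d = v + u"
    using orthogonal_subspace_decomp_exists[of ?S d] by blast
  have vS: "v \<in> ?S" using v span_eq_iff sub by blast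
  then obtain w where w: "v = transpose A *v w" by blast
  have Au: "A *v u = 0"
  proof -
    have "orthogonal u (transpose A *v (A *v u))" using u span_base by blast
    hence "u \<bullet> (transpose A *v (A *v u)) = 0" by (simp only: orthogonal_def)
    hence "(A *v u) \<bullet> (A *v u) = 0"
      by (simp only: inner_commute[of u] tr_inner)
    thus ?thesis by simp
  qed
  have Ad: "A *v d = A *v v" using d Au by (simp add: matrix_vector_right_distrib)
  have "\<kappa> * norm w \<le> norm v" using assms(2) w by (simp add: sing_vals_ge_def)
  have "norm v ^ 2 = w \<bullet> (A *v v)" using w by (simp add: power2_norm_eq_inner dot_lmul_matrix)
  also have "\<dots> \<le> norm w * norm (A *v v)" by (rule norm_cauchy_schwarz)
  finally have "\<kappa> * norm v ^ 2 \<le> \<kappa> * norm w * norm (A *v v)"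
    using assms(1) by (simp add: mult_left_mono mult.assoc)
  also have "\<dots> \<le> norm v * norm (A *v v)"
    using \<open>\<kappa> * norm w \<le> norm v\<close> by (simp add: mult_right_mono)
  finally have "\<kappa> * norm v * norm v \<le> norm (A *v v) * norm v"
    by (simp add: power2_eq_square mult.commute mult.left_commute)
  hence "\<kappa> * norm v \<le> norm (A *v v)"
    by (cases "norm v = 0") (auto simp: assms(1))
  then show ?thesis using that[of u v] d Ad Au by (simp add: add.commute)
qed

lemma deriv_line:
  fixes F :: "real^'n \<Rightarrow> real"
  assumes "(F has_derivative (\<lambda>k. G \<bullet> k)) (at (x + t *\<^sub>R h))"
  shows "((\<lambda>t. F (x + t *\<^sub>R h)) has_real_derivative (G \<bullet> h)) (at t)"
proof -
  have l: "((\<lambda>t. x + t *\<^sub>R h) has_derivative (\<lambda>s. s *\<^sub>R h)) (at t)"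
    by (auto intro!: derivative_eq_intros)
  have "((F \<circ> (\<lambda>t. x + t *\<^sub>R h)) has_derivative ((\<lambda>k. G \<bullet> k) \<circ> (\<lambda>s. s *\<^sub>R h))) (at t)"
    by (rule diff_chain_at[OF l]) (simp add: assms)
  moreover have "((\<lambda>k. G \<bullet> k) \<circ> (\<lambda>s. s *\<^sub>R h)) = (*) (G \<bullet> h)"
    by (auto simp: fun_eq_iff)
  ultimately show ?thesis by (simp add: has_field_derivative_def o_def)
qed

lemma descent_aux:
  fixes F :: "real^'n \<Rightarrow> real"
  assumes conv: "convex X" and der: "\<forall>z\<in>X. (F has_derivative (\<lambda>h. G z \<bullet> h)) (at z)"
    and lip: "\<forall>z\<in>X. \<forall>w\<in>X. norm (G z - G w) \<le> L * norm (z - w)"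
    and x: "x \<in> X" and xh: "x + h \<in> X"
  shows "F (x + h) - F x - G x \<bullet> h \<le> L/2 * norm h ^ 2"
proof -
  have inX: "x + t *\<^sub>R h \<in> X" if "0 \<le> t" "t \<le> 1" for t
  proof -
    have "(1 - t) *\<^sub>R x + t *\<^sub>R (x + h) \<in> X"
      using conv x xh that by (simp add: convex_alt)
    moreover have "(1 - t) *\<^sub>R x + t *\<^sub>R (x + h) = x + t *\<^sub>R h"
      by (simp add: algebra_simps)
    ultimately show ?thesis by simp
  qed
  define \<phi> where "\<phi> t = L/2 * t\<^sup>2 * (norm h)\<^sup>2 - (F (x + t *\<^sub>R h) - F x - t * (G x \<bullet> h))" for t
  have "\<phi> 0 \<le> \<phi> 1"
  proof (rule DERIV_nonneg_imp_nondecreasing[of 0 1])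
    fix t :: real assume t: "0 \<le> t" "t \<le> 1"
    have dF: "((\<lambda>t. F (x + t *\<^sub>R h)) has_real_derivative (G (x + t *\<^sub>R h) \<bullet> h)) (at t)"
      using der inX[OF t] by (intro deriv_line) auto
    have sq: "DERIV (\<lambda>t. t^2) t :> 2*t" using DERIV_pow[of 2 t] by simp
    have d1: "DERIV (\<lambda>t. L/2 * t^2 * (norm h)\<^sup>2) t :> L/2 * (2*t) * (norm h)\<^sup>2"
      by (rule DERIV_cmult_right[OF DERIV_cmult[OF sq]])
    have d2: "DERIV (\<lambda>t. t * (G x \<bullet> h)) t :> 1 * (G x \<bullet> h)"
      by (rule DERIV_cmult_right[OF DERIV_ident])
    have d3: "DERIV (\<lambda>t. F (x + t *\<^sub>R h) - F x - t * (G x \<bullet> h)) t :> G (x + t *\<^sub>R h) \<bullet> h - 0 - 1 * (G x \<bullet> h)"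
      by (rule DERIV_diff[OF DERIV_diff[OF dF DERIV_const] d2])
    have "DERIV \<phi> t :> (L/2 * (2 * t) * (norm h)\<^sup>2 - (G (x + t *\<^sub>R h) \<bullet> h - 0 - 1 * (G x \<bullet> h)))"
    proof -
      have e: "\<phi> = (\<lambda>t. L/2 * t^2 * (norm h)\<^sup>2 - (F (x + t *\<^sub>R h) - F x - t * (G x \<bullet> h)))"
        by (rule ext) (simp add: \<phi>_def)
      show ?thesis using DERIV_diff[OF d1 d3] unfolding e .
    qed
    moreover have "(G (x + t *\<^sub>R h) - G x) \<bullet> h \<le> L * t * (norm h)\<^sup>2"
    proof -
      have "(G (x + t *\<^sub>R h) - G x) \<bullet> h \<le> norm (G (x + t *\<^sub>R h) - G x) * norm h"
        by (rule norm_cauchy_schwarz)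
      also have "\<dots> \<le> L * norm (t *\<^sub>R h) * norm h"
      proof (rule mult_right_mono)
        have "norm (G (x + t *\<^sub>R h) - G x) \<le> L * norm ((x + t *\<^sub>R h) - x)"
          using lip inX[OF t] x by blast
        thus "norm (G (x + t *\<^sub>R h) - G x) \<le> L * norm (t *\<^sub>R h)" by simp
      qed simp
      finally show ?thesis using t by (simp add: power2_eq_square mult.assoc)
    qed
    ultimately show "\<exists>y. DERIV \<phi> t :> y \<and> 0 \<le> y"
      by (intro exI[of _ "L/2 * (2 * t) * (norm h)\<^sup>2 - (G (x + t *\<^sub>R h) \<bullet> h - 0 - 1 * (G x \<bullet> h))"])
         (simp add: inner_diff_left algebra_simps)
  qed simp
  thus ?thesis by (simp add: \<phi>_def)
qed

lemma descent:
  fixes F :: "real^'n \<Rightarrow> real"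
  assumes conv: "convex X" and der: "\<forall>z\<in>X. (F has_derivative (\<lambda>h. G z \<bullet> h)) (at z)"
    and lip: "\<forall>z\<in>X. \<forall>w\<in>X. norm (G z - G w) \<le> L * norm (z - w)"
    and x: "x \<in> X" and xh: "x + h \<in> X"
  shows "\<bar>F (x + h) - F x - G x \<bullet> h\<bar> \<le> L/2 * norm h ^ 2"
proof -
  have a: "F (x + h) - F x - G x \<bullet> h \<le> L/2 * norm h ^ 2"
    by (rule descent_aux[OF assms])
  have der': "\<forall>z\<in>X. ((\<lambda>z. - F z) has_derivative (\<lambda>h. (- G z) \<bullet> h)) (at z)"
  proof
    fix z assume "z \<in> X"
    then have "(F has_derivative (\<lambda>h. G z \<bullet> h)) (at z)" using der by blast
    from has_derivative_minus[OF this]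
    have "((\<lambda>z. - F z) has_derivative (\<lambda>h. - (G z \<bullet> h))) (at z)" .
    thus "((\<lambda>z. - F z) has_derivative (\<lambda>h. (- G z) \<bullet> h)) (at z)" by simp
  qed
  have lip': "\<forall>z\<in>X. \<forall>w\<in>X. norm ((- G z) - (- G w)) \<le> L * norm (z - w)"
  proof (intro ballI)
    fix z w assume "z \<in> X" "w \<in> X"
    hence "norm (G z - G w) \<le> L * norm (z - w)" using lip by blast
    moreover have "norm ((- G z) - (- G w)) = norm (G z - G w)"
      by (metis minus_diff_minus norm_minus_cancel)
    ultimately show "norm ((- G z) - (- G w)) \<le> L * norm (z - w)" by simp
  qed
  have b: "- F (x + h) - (- F x) - (- G x) \<bullet> h \<le> L/2 * norm h ^ 2"
    by (rule descent_aux[OF conv der' lip' x xh])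
  show ?thesis using a b unfolding abs_le_iff inner_minus_left by linarith
qed

lemma l1norm_nonneg: "0 \<le> l1norm v" unfolding l1norm_def by (simp add: sum_nonneg)

lemma sd_core:
  fixes f :: "real^'n \<Rightarrow> real" and c :: "real^'n \<Rightarrow> real^'m" and Jx :: "real^'n^'m"
  assumes \<tau>: "0 < \<tau>" and \<eta>: "0 < \<eta>" "\<eta> < 1" and \<alpha>: "0 < \<alpha>"
    and Jd: "Jx *v d = - c x"
    and hF: "f (x + \<alpha> *\<^sub>R d) \<le> f x + \<alpha> * (gv \<bullet> d) + 1/2 * Lf * \<alpha>^2 * (norm d)^2"
    and hC: "\<forall>i. \<bar>c (x + \<alpha> *\<^sub>R d) $ i\<bar> \<le> \<bar>c x $ i + \<alpha> * ((Jx *v d) $ i)\<bar> + 1/2 * \<Gamma> i * \<alpha>^2 * (norm d)^2"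
    and cond: "(\<alpha> \<le> 1 \<and> (\<tau> * Lf + (\<Sum>i\<in>UNIV. \<Gamma> i)) * \<alpha> * (norm d)^2 \<le> 2 * (1 - \<eta>) * model_red c x \<tau> gv Hm d)
             \<or> (1 < \<alpha> \<and> (\<tau> * Lf + (\<Sum>i\<in>UNIV. \<Gamma> i)) * \<alpha> * (norm d)^2 = 2 * (1 - \<eta>) * model_red c x \<tau> gv Hm d - 4 * l1norm (c x))"
  shows "suff_dec f c \<eta> \<tau> x gv Hm d \<alpha>"
proof -
  define D where "D = (norm d)^2"
  define l where "l = l1norm (c x)"
  define P where "P = gv \<bullet> d"
  define M where "M = max (d \<bullet> (Hm *v d)) 0"
  define S where "S = (\<Sum>i\<in>UNIV. \<Gamma> i)"
  have M0: "0 \<le> M" by (simp add: M_def)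
  have l0: "0 \<le> l" by (simp add: l_def l1norm_nonneg)
  have D0: "0 \<le> D" by (simp add: D_def)
  have l1: "l1norm (c (x + \<alpha> *\<^sub>R d)) \<le> \<bar>1 - \<alpha>\<bar> * l + 1/2 * S * \<alpha>^2 * D"
  proof -
    have "l1norm (c (x + \<alpha> *\<^sub>R d)) \<le> (\<Sum>i\<in>UNIV. \<bar>1 - \<alpha>\<bar> * \<bar>c x $ i\<bar> + 1/2 * \<Gamma> i * \<alpha>^2 * D)"
      unfolding l1norm_def
    proof (rule sum_mono)
      fix i
      have "c x $ i + \<alpha> * ((Jx *v d) $ i) = (1 - \<alpha>) * c x $ i" using Jd by (simp add: algebra_simps)
      thus "\<bar>c (x + \<alpha> *\<^sub>R d) $ i\<bar> \<le> \<bar>1 - \<alpha>\<bar> * \<bar>c x $ i\<bar> + 1/2 * \<Gamma> i * \<alpha>^2 * D"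
        using hC by (metis D_def abs_mult)
    qed
    also have "\<dots> = \<bar>1 - \<alpha>\<bar> * l + 1/2 * S * \<alpha>^2 * D"
      by (simp add: sum.distrib sum_distrib_left sum_distrib_right l_def l1norm_def S_def)
    finally show ?thesis .
  qed
  have lhs: "merit f c \<tau> (x + \<alpha> *\<^sub>R d) \<le> \<tau> * f x + \<tau> * \<alpha> * P + \<bar>1 - \<alpha>\<bar> * l + 1/2 * (\<tau> * Lf + S) * \<alpha>^2 * D"
  proof -
    have "\<tau> * f (x + \<alpha> *\<^sub>R d) \<le> \<tau> * (f x + \<alpha> * P + 1/2 * Lf * \<alpha>^2 * D)"
      using hF \<tau> by (simp add: P_def D_def)
    moreover have "\<tau> * (f x + \<alpha> * P + 1/2 * Lf * \<alpha>^2 * D) = \<tau> * f x + \<tau> * \<alpha> * P + 1/2 * (\<tau> * Lf) * \<alpha>^2 * D"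
      by (simp add: algebra_simps)
    moreover have "1/2 * (\<tau> * Lf + S) * \<alpha>^2 * D = 1/2 * (\<tau> * Lf) * \<alpha>^2 * D + 1/2 * S * \<alpha>^2 * D"
      by (simp add: algebra_simps)
    ultimately show ?thesis using l1 unfolding merit_def by linarith
  qed
  have mr: "model_red c x \<tau> gv Hm d = - \<tau> * (P + 1/2 * M) + l"
    by (simp add: model_red_def P_def M_def l_def)
  have rhs: "merit f c \<tau> x - \<eta> * \<alpha> * model_red c x \<tau> gv Hm d = \<tau> * f x + l - \<eta> * \<alpha> * (- \<tau> * (P + 1/2 * M) + l)"
    by (simp add: merit_def mr l_def)
  have tM: "0 \<le> \<alpha> * \<tau> * M" using \<alpha> \<tau> M0 by simp
  have key: "\<tau> * \<alpha> * P + \<bar>1 - \<alpha>\<bar> * l + 1/2 * (\<tau> * Lf + S) * \<alpha>^2 * D \<le> l - \<eta> * \<alpha> * (- \<tau> * (P + 1/2 * M) + l)"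
    using cond
  proof
    assume h: "\<alpha> \<le> 1 \<and> (\<tau> * Lf + (\<Sum>i\<in>UNIV. \<Gamma> i)) * \<alpha> * (norm d)^2 \<le> 2 * (1 - \<eta>) * model_red c x \<tau> gv Hm d"
    hence a1: "\<bar>1 - \<alpha>\<bar> * l = (1 - \<alpha>) * l" by simp
    have "\<alpha> * ((\<tau> * Lf + S) * \<alpha> * D) \<le> \<alpha> * (2 * (1 - \<eta>) * (- \<tau> * (P + 1/2 * M) + l))"
      using h \<alpha> mr by (intro mult_left_mono) (auto simp: S_def D_def)
    hence Q: "(\<tau> * Lf + S) * \<alpha>^2 * D \<le> 2 * (1 - \<eta>) * \<alpha> * (- \<tau> * (P + 1/2 * M) + l)"
      by (simp add: power2_eq_square algebra_simps)
    have eq: "(l - \<eta> * \<alpha> * (- \<tau> * (P + 1/2 * M) + l)) - (\<tau> * \<alpha> * P + (1 - \<alpha>) * l + 1/2 * ((\<tau> * Lf + S) * \<alpha>^2 * D))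
       = ((1 - \<eta>) * \<alpha> * (- \<tau> * (P + 1/2 * M) + l) - 1/2 * ((\<tau> * Lf + S) * \<alpha>^2 * D)) + 1/2 * (\<alpha> * \<tau> * M)"
      by (simp add: field_simps)
    show ?thesis using Q eq tM a1 by linarith
  next
    assume h: "1 < \<alpha> \<and> (\<tau> * Lf + (\<Sum>i\<in>UNIV. \<Gamma> i)) * \<alpha> * (norm d)^2 = 2 * (1 - \<eta>) * model_red c x \<tau> gv Hm d - 4 * l1norm (c x)"
    hence a1: "\<bar>1 - \<alpha>\<bar> * l = (\<alpha> - 1) * l" by simp
    have "\<alpha> * ((\<tau> * Lf + S) * \<alpha> * D) = \<alpha> * (2 * (1 - \<eta>) * (- \<tau> * (P + 1/2 * M) + l) - 4 * l)"
      using h mr by (simp add: S_def D_def l_def)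
    hence Q: "(\<tau> * Lf + S) * \<alpha>^2 * D = 2 * (1 - \<eta>) * \<alpha> * (- \<tau> * (P + 1/2 * M) + l) - 4 * \<alpha> * l"
      by (simp add: power2_eq_square algebra_simps)
    have eq: "(l - \<eta> * \<alpha> * (- \<tau> * (P + 1/2 * M) + l)) - (\<tau> * \<alpha> * P + (\<alpha> - 1) * l + 1/2 * ((\<tau> * Lf + S) * \<alpha>^2 * D))
       = (1 - \<eta>) * \<alpha> * (- \<tau> * (P + 1/2 * M) + l) - 2 * \<alpha> * l - 1/2 * ((\<tau> * Lf + S) * \<alpha>^2 * D) + 2 * l + 1/2 * (\<alpha> * \<tau> * M)"
      by (simp add: field_simps)
    show ?thesis using Q eq tM a1 l0 by linarith
  qed
  show ?thesis unfolding suff_dec_def using lhs rhs key by linarith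
qed

lemma norm_le_l1norm: "norm v \<le> l1norm v"
  unfolding l1norm_def by (rule norm_le_l1_cart)

lemma l1norm_le: "l1norm (v::real^'m) \<le> real CARD('m) * norm v"
proof -
  have "l1norm v \<le> (\<Sum>i\<in>(UNIV::'m set). norm v)"
    unfolding l1norm_def by (intro sum_mono component_le_norm_cart)
  thus ?thesis by simp
qed

lemma Hbound:
  assumes "onorm (\<lambda>v. Hm *v v) \<le> \<kappa>H"
  shows "norm (Hm *v (v::real^'n)) \<le> \<kappa>H * norm v"
proof -
  have "norm (Hm *v v) \<le> onorm (\<lambda>v. Hm *v v) * norm v"
    by (rule onorm[OF matrix_vector_mul_bounded_linear])
  also have "\<dots> \<le> \<kappa>H * norm v" using assms by (intro mult_right_mono) auto
  finally show ?thesis .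
qed

lemma Hinner:
  assumes "onorm (\<lambda>v. Hm *v v) \<le> \<kappa>H"
  shows "\<bar>u \<bullet> (Hm *v (v::real^'n))\<bar> \<le> \<kappa>H * norm u * norm v"
proof -
  have "\<bar>u \<bullet> (Hm *v v)\<bar> \<le> norm u * norm (Hm *v v)" by (rule Cauchy_Schwarz_ineq2)
  also have "\<dots> \<le> norm u * (\<kappa>H * norm v)" using Hbound[OF assms] by (intro mult_left_mono) auto
  finally show ?thesis by (simp add: mult_ac)
qed

lemma amgm: fixes a b k z :: real assumes "0 < z" shows "2 * k * a * b \<le> z * a^2 + k^2 * b^2 / z"
proof -
  have "0 \<le> (z * a - k * b)^2 / z" using assms by simp
  also have "(z * a - k * b)^2 / z = z * a^2 + k^2 * b^2 / z - 2 * k * a * b"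
    using assms by (simp add: field_simps power2_eq_square)
  finally show ?thesis by simp
qed

lemma linalg:
  fixes A :: "real^'n^'m" and Hm :: "real^'n^'n"
  assumes \<kappa>: "0 < \<kappa>" "sing_vals_ge \<kappa> A" and \<kappa>H: "0 < \<kappa>H" "onorm (\<lambda>v. Hm *v v) \<le> \<kappa>H"
    and \<zeta>: "0 < \<zeta>" "\<forall>u. A *v u = 0 \<longrightarrow> \<zeta> * (norm u)^2 \<le> u \<bullet> (Hm *v u)"
    and k1: "Hm *v d + transpose A *v yv = - gv" and k2: "A *v d = - cv"
    and gB: "norm gv \<le> Bg" and cB: "norm cv \<le> Bc"
  shows "norm d \<le> (Bg + \<kappa>H * (Bc/\<kappa>))/\<zeta> + Bc/\<kappa>"
    and "- (d \<bullet> (Hm *v d)) \<le> (\<kappa>H^2/\<zeta> + \<kappa>H) * (Bc/\<kappa>^2) * norm cv"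
    and "(norm d)^2 \<le> 4/\<zeta> * max (d \<bullet> (Hm *v d)) 0 + (4/\<zeta>*(2*\<kappa>H^2/\<zeta> + \<kappa>H) + 2) * (Bc/\<kappa>^2) * norm cv"
proof -
  obtain u v where d: "d = u + v" and Au: "A *v u = 0" and kv: "\<kappa> * norm v \<le> norm (A *v d)"
    using decomp[OF \<kappa>] by blast
  define a where "a = norm u"
  define b where "b = norm v"
  have a0: "0 \<le> a" and b0: "0 \<le> b" by (simp_all add: a_def b_def)
  have bc: "b \<le> norm cv / \<kappa>" using kv k2 \<kappa>(1) by (simp add: b_def field_simps)
  have Bc0: "0 \<le> Bc" using cB norm_ge_zero order_trans by blast
  have bB: "b \<le> Bc / \<kappa>" using bc cB \<kappa>(1) by (meson divide_right_mono less_imp_le order_trans)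
  have b2: "b^2 \<le> (Bc/\<kappa>^2) * norm cv"
  proof -
    have "b^2 \<le> (norm cv / \<kappa>)^2" using bc b0 by (simp add: power_mono)
    also have "\<dots> = norm cv * norm cv / \<kappa>^2" by (simp add: power2_eq_square)
    also have "\<dots> \<le> Bc * norm cv / \<kappa>^2" using cB by (intro divide_right_mono mult_right_mono) auto
    finally show ?thesis by simp
  qed
  have uHu: "\<zeta> * a^2 \<le> u \<bullet> (Hm *v u)" using \<zeta>(2) Au by (simp add: a_def)
  have c1: "\<bar>u \<bullet> (Hm *v v)\<bar> \<le> \<kappa>H * a * b" using Hinner[OF \<kappa>H(2)] by (simp add: a_def b_def)
  have c2: "\<bar>v \<bullet> (Hm *v u)\<bar> \<le> \<kappa>H * a * b" using Hinner[OF \<kappa>H(2), of v u] by (simp add: a_def b_def mult_ac)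
  have c3: "\<bar>v \<bullet> (Hm *v v)\<bar> \<le> \<kappa>H * b^2" using Hinner[OF \<kappa>H(2), of v v] by (simp add: b_def power2_eq_square mult_ac)
  have ex: "d \<bullet> (Hm *v d) = u \<bullet> (Hm *v u) + u \<bullet> (Hm *v v) + v \<bullet> (Hm *v u) + v \<bullet> (Hm *v v)"
    by (simp add: d matrix_vector_right_distrib inner_add_left inner_add_right)
  have nd: "norm d \<le> a + b" using d norm_triangle_ineq by (simp add: a_def b_def)
  have uy: "u \<bullet> (transpose A *v yv) = 0"
    using tr_inner[of A yv u] Au by (simp add: inner_commute)
  have "u \<bullet> (Hm *v d) = - (u \<bullet> gv)"
  proof -
    have "u \<bullet> (Hm *v d + transpose A *v yv) = u \<bullet> (- gv)" using k1 by simp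
    thus ?thesis using uy by (simp add: inner_add_right)
  qed
  hence "u \<bullet> (Hm *v u) = - (u \<bullet> gv) - u \<bullet> (Hm *v v)"
    by (simp add: d matrix_vector_right_distrib inner_add_right)
  moreover have "- (u \<bullet> gv) \<le> a * Bg"
  proof -
    have "\<bar>u \<bullet> gv\<bar> \<le> a * norm gv" using Cauchy_Schwarz_ineq2 by (simp add: a_def)
    also have "\<dots> \<le> a * Bg" using gB a0 by (simp add: mult_left_mono)
    finally show ?thesis by simp
  qed
  ultimately have "\<zeta> * a^2 \<le> a * Bg + \<kappa>H * a * b" using uHu c1 by linarith
  hence za: "\<zeta> * a \<le> Bg + \<kappa>H * b"
  proof (cases "a = 0")
    case True
    have "0 \<le> Bg" using gB norm_ge_zero order_trans by blast
    thus ?thesis using True \<kappa>H b0 by simp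
  next
    case False
    hence "0 < a" using a0 by simp
    assume "\<zeta> * a^2 \<le> a * Bg + \<kappa>H * a * b"
    hence "a * (\<zeta> * a) \<le> a * (Bg + \<kappa>H * b)" by (simp add: power2_eq_square algebra_simps)
    thus ?thesis using \<open>0 < a\<close> by simp
  qed
  have "a \<le> (Bg + \<kappa>H * (Bc/\<kappa>))/\<zeta>"
  proof -
    have "\<zeta> * a \<le> Bg + \<kappa>H * (Bc/\<kappa>)" using za bB \<kappa>H(1) by (smt (verit) mult_left_mono)
    thus ?thesis using \<zeta>(1) by (simp add: field_simps)
  qed
  thus "norm d \<le> (Bg + \<kappa>H * (Bc/\<kappa>))/\<zeta> + Bc/\<kappa>" using nd bB by linarith
  have am1: "2 * \<kappa>H * a * b \<le> \<zeta> * a^2 + \<kappa>H^2 * b^2 / \<zeta>" by (rule amgm[OF \<zeta>(1)])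
  have "- (d \<bullet> (Hm *v d)) \<le> (\<kappa>H^2/\<zeta> + \<kappa>H) * b^2"
    using ex uHu c1 c2 c3 am1 by (simp add: algebra_simps abs_le_iff)
  also have "\<dots> \<le> (\<kappa>H^2/\<zeta> + \<kappa>H) * ((Bc/\<kappa>^2) * norm cv)"
    using b2 \<kappa>H(1) \<zeta>(1) by (intro mult_left_mono) auto
  finally show "- (d \<bullet> (Hm *v d)) \<le> (\<kappa>H^2/\<zeta> + \<kappa>H) * (Bc/\<kappa>^2) * norm cv" by (simp add: mult_ac)
  have am2: "2 * (2 * \<kappa>H) * a * b \<le> \<zeta> * a^2 + (2 * \<kappa>H)^2 * b^2 / \<zeta>" by (rule amgm[OF \<zeta>(1)])
  have "\<zeta> * a^2 \<le> max (d \<bullet> (Hm *v d)) 0 + 2 * \<kappa>H * a * b + \<kappa>H * b^2"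
    using ex uHu c1 c2 c3 by (simp add: abs_le_iff) linarith
  hence "\<zeta> * a^2 \<le> 2 * max (d \<bullet> (Hm *v d)) 0 + (4 * \<kappa>H^2 / \<zeta> + 2 * \<kappa>H) * b^2"
    using am2 by (simp add: power_mult_distrib algebra_simps)
  hence a2: "a^2 \<le> 2/\<zeta> * max (d \<bullet> (Hm *v d)) 0 + 2/\<zeta> * (2 * \<kappa>H^2/\<zeta> + \<kappa>H) * b^2"
    using \<zeta>(1) by (simp add: field_simps)
  have "(norm d)^2 \<le> (a + b)^2" using nd by (simp add: power_mono)
  also have "\<dots> \<le> 2 * a^2 + 2 * b^2" using amgm[of 1 1 a b] by (simp add: power2_eq_square algebra_simps)
  also have "\<dots> \<le> 2 * (2/\<zeta> * max (d \<bullet> (Hm *v d)) 0 + 2/\<zeta> * (2 * \<kappa>H^2/\<zeta> + \<kappa>H) * b^2) + 2 * b^2"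
    by (intro add_right_mono mult_left_mono a2) simp
  also have "\<dots> = 4/\<zeta> * max (d \<bullet> (Hm *v d)) 0 + (4/\<zeta>*(2*\<kappa>H^2/\<zeta> + \<kappa>H) + 2) * b^2"
    by (simp add: algebra_simps)
  also have "\<dots> \<le> 4/\<zeta> * max (d \<bullet> (Hm *v d)) 0 + (4/\<zeta>*(2*\<kappa>H^2/\<zeta> + \<kappa>H) + 2) * ((Bc/\<kappa>^2) * norm cv)"
    using b2 \<kappa>H(1) \<zeta>(1) by (intro add_left_mono mult_left_mono) auto
  finally show "(norm d)^2 \<le> 4/\<zeta> * max (d \<bullet> (Hm *v d)) 0 + (4/\<zeta>*(2*\<kappa>H^2/\<zeta> + \<kappa>H) + 2) * (Bc/\<kappa>^2) * norm cv"
    by (simp add: mult_ac)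
qed

lemma tau_props:
  assumes \<epsilon>: "0 < \<epsilon>" "\<epsilon> < 1" and \<sigma>: "0 < \<sigma>" "\<sigma> < 1" and tp: "0 < \<tau>p" and l0: "0 \<le> l"
    and C: "0 < C" and hden: "gd + max dHd 0 \<le> C * l"
  shows "tau_update \<epsilon> \<sigma> \<tau>p l gd dHd \<le> \<tau>p"
    and "min \<tau>p ((1 - \<epsilon>) * (1 - \<sigma>) / C) \<le> tau_update \<epsilon> \<sigma> \<tau>p l gd dHd"
    and "tau_update \<epsilon> \<sigma> \<tau>p l gd dHd * (gd + max dHd 0) \<le> (1 - \<sigma>) * l"
proof -
  define den where "den = gd + max dHd 0"
  define T where "T = (1 - \<sigma>) * l / den"
  have tu: "tau_update \<epsilon> \<sigma> \<tau>p l gd dHd = (if den \<le> 0 then \<tau>p else if \<tau>p \<le> T then \<tau>p else (1 - \<epsilon>) * T)"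
    by (simp add: tau_update_def den_def T_def Let_def)
  have "tau_update \<epsilon> \<sigma> \<tau>p l gd dHd \<le> \<tau>p \<and> min \<tau>p ((1 - \<epsilon>) * (1 - \<sigma>) / C) \<le> tau_update \<epsilon> \<sigma> \<tau>p l gd dHd
        \<and> tau_update \<epsilon> \<sigma> \<tau>p l gd dHd * den \<le> (1 - \<sigma>) * l"
  proof (cases "den \<le> 0")
    case True
    have "\<tau>p * den \<le> 0" using True tp by (simp add: mult_nonneg_nonpos)
    moreover have "0 \<le> (1 - \<sigma>) * l" using \<sigma> l0 by simp
    ultimately show ?thesis using tu True by simp
  next
    case False
    hence dp: "0 < den" by simp
    have hd: "den \<le> C * l" using hden by (simp add: den_def)
    hence lp: "0 < l" using dp C by (smt (verit) mult_nonneg_nonpos)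
    have T0: "0 \<le> T" using dp l0 \<sigma> by (simp add: T_def)
    have Td: "T * den = (1 - \<sigma>) * l" using dp by (simp add: T_def)
    show ?thesis
    proof (cases "\<tau>p \<le> T")
      case True
      have "\<tau>p * den \<le> T * den" using True dp by (simp add: mult_right_mono)
      thus ?thesis using tu False True Td by simp
    next
      case nT: False
      have "(1 - \<sigma>) / C \<le> T"
      proof -
        have "(1 - \<sigma>) / C = (1 - \<sigma>) * l / (C * l)" using lp by simp
        also have "\<dots> \<le> (1 - \<sigma>) * l / den" using dp hd lp \<sigma> by (intro divide_left_mono) auto
        finally show ?thesis by (simp add: T_def)
      qed
      hence "(1 - \<epsilon>) * ((1 - \<sigma>) / C) \<le> (1 - \<epsilon>) * T" using \<epsilon> by (intro mult_left_mono) auto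
      moreover have "(1 - \<epsilon>) * T \<le> T"
      proof -
        have "0 \<le> \<epsilon> * T" using \<epsilon> T0 by simp
        thus ?thesis by (simp add: algebra_simps)
      qed
      moreover have "(1 - \<epsilon>) * T * den \<le> (1 - \<sigma>) * l"
        using Td \<epsilon> \<sigma> l0 by (simp add: mult.assoc mult_le_cancel_right1 mult_left_le_one_le)
      ultimately show ?thesis using tu False nT by (simp add: min_le_iff_disj)
    qed
  qed
  thus "tau_update \<epsilon> \<sigma> \<tau>p l gd dHd \<le> \<tau>p"
    and "min \<tau>p ((1 - \<epsilon>) * (1 - \<sigma>) / C) \<le> tau_update \<epsilon> \<sigma> \<tau>p l gd dHd"
    and "tau_update \<epsilon> \<sigma> \<tau>p l gd dHd * (gd + max dHd 0) \<le> (1 - \<sigma>) * l"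
    by (simp_all add: den_def)
qed

lemma alg1_alpha_props:
  assumes \<Lambda>: "0 < \<Lambda>" and D: "0 < D" and l0: "0 \<le> l"
  shows "(alg1_alpha \<eta> dq l \<Lambda> D \<le> 1 \<and> \<Lambda> * alg1_alpha \<eta> dq l \<Lambda> D * D \<le> 2 * (1 - \<eta>) * dq)
       \<or> (1 < alg1_alpha \<eta> dq l \<Lambda> D \<and> \<Lambda> * alg1_alpha \<eta> dq l \<Lambda> D * D = 2 * (1 - \<eta>) * dq - 4 * l)"
    and "min 1 (2 * (1 - \<eta>) * dq / (\<Lambda> * D)) \<le> alg1_alpha \<eta> dq l \<Lambda> D"
proof -
  define ah where "ah = 2 * (1 - \<eta>) * dq / (\<Lambda> * D)"
  define atl where "atl = ah - 4 * l / (\<Lambda> * D)"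
  have ad: "alg1_alpha \<eta> dq l \<Lambda> D = (if ah < 1 then ah else if atl \<le> 1 then 1 else atl)"
    by (simp add: alg1_alpha_def ah_def atl_def Let_def)
  have LD: "0 < \<Lambda> * D" using \<Lambda> D by simp
  have nz: "\<Lambda> \<noteq> 0" "D \<noteq> 0" using \<Lambda> D by auto
  have e1: "\<Lambda> * ah * D = 2 * (1 - \<eta>) * dq"
  proof -
    have "\<Lambda> * ah * D = (\<Lambda> * D) * (2 * (1 - \<eta>) * dq / (\<Lambda> * D))" by (simp add: ah_def mult_ac)
    also have "\<dots> = 2 * (1 - \<eta>) * dq" using nz by simp
    finally show ?thesis .
  qed
  have e2: "\<Lambda> * atl * D = 2 * (1 - \<eta>) * dq - 4 * l"
  proof -
    have "\<Lambda> * atl * D = \<Lambda> * ah * D - (\<Lambda> * D) * (4 * l / (\<Lambda> * D))" by (simp add: atl_def algebra_simps)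
    also have "(\<Lambda> * D) * (4 * l / (\<Lambda> * D)) = 4 * l" using nz by simp
    finally show ?thesis using e1 by simp
  qed
  have atl_le: "atl \<le> ah" using LD l0 by (simp add: atl_def)
  show "(alg1_alpha \<eta> dq l \<Lambda> D \<le> 1 \<and> \<Lambda> * alg1_alpha \<eta> dq l \<Lambda> D * D \<le> 2 * (1 - \<eta>) * dq)
       \<or> (1 < alg1_alpha \<eta> dq l \<Lambda> D \<and> \<Lambda> * alg1_alpha \<eta> dq l \<Lambda> D * D = 2 * (1 - \<eta>) * dq - 4 * l)"
  proof (cases "ah < 1")
    case True thus ?thesis using ad e1 by simp
  next
    case False
    show ?thesis
    proof (cases "atl \<le> 1")
      case True
      have "1 * (\<Lambda> * D) \<le> ah * (\<Lambda> * D)" using False LD by (intro mult_right_mono) auto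
      hence "\<Lambda> * 1 * D \<le> \<Lambda> * ah * D" by (simp add: mult_ac)
      thus ?thesis using ad e1 False True by simp
    next
      case f2: False thus ?thesis using ad e2 False by simp
    qed
  qed
  show "min 1 (2 * (1 - \<eta>) * dq / (\<Lambda> * D)) \<le> alg1_alpha \<eta> dq l \<Lambda> D"
  proof -
    have "min 1 ah \<le> (if ah < 1 then ah else if atl \<le> 1 then 1 else atl)" by (auto simp: min_def)
    thus ?thesis unfolding ah_def[symmetric] ad .
  qed
qed

lemma comp_deriv:
  assumes "(c has_derivative (\<lambda>h. Jz *v h)) (at z)"
  shows "((\<lambda>z. c z $ i) has_derivative (\<lambda>h. (Jz $ i) \<bullet> h)) (at z)"
  using bounded_linear.has_derivative[OF bounded_linear_vec_nth[of i] assms]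
  by (simp add: matrix_vector_mul_component)

lemma trial_bounds:
  fixes f :: "real^'n \<Rightarrow> real" and c :: "real^'n \<Rightarrow> real^'m"
  assumes conv: "convex X"
    and f_deriv: "\<forall>z\<in>X. (f has_derivative (\<lambda>h. g z \<bullet> h)) (at z)"
    and g_lip: "\<forall>z\<in>X. \<forall>w\<in>X. norm (g z - g w) \<le> L * norm (z - w)"
    and c_deriv: "\<forall>z\<in>X. (c has_derivative (\<lambda>h. J z *v h)) (at z)"
    and J_lip: "\<forall>i. \<forall>z\<in>X. \<forall>w\<in>X. norm (J z $ i - J w $ i) \<le> \<gamma> i * norm (z - w)"
    and x: "x \<in> X" and xa: "x + \<alpha> *\<^sub>R d \<in> X" and \<alpha>: "0 \<le> \<alpha>"
    and LL: "L \<le> L'" and G: "\<forall>i. \<gamma> i \<le> \<Gamma> i"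
  shows "f (x + \<alpha> *\<^sub>R d) \<le> f x + \<alpha> * (g x \<bullet> d) + 1/2 * L' * \<alpha>^2 * (norm d)^2"
    and "\<forall>i. \<bar>c (x + \<alpha> *\<^sub>R d) $ i\<bar> \<le> \<bar>c x $ i + \<alpha> * ((J x *v d) $ i)\<bar> + 1/2 * \<Gamma> i * \<alpha>^2 * (norm d)^2"
proof -
  have nh: "(norm (\<alpha> *\<^sub>R d))^2 = \<alpha>^2 * (norm d)^2" using \<alpha> by (simp add: power_mult_distrib)
  have A: "\<bar>f (x + \<alpha> *\<^sub>R d) - f x - \<alpha> * (g x \<bullet> d)\<bar> \<le> L/2 * (\<alpha>^2 * (norm d)^2)"
    using descent[OF conv f_deriv g_lip x xa] unfolding nh inner_scaleR_right .
  have B: "L/2 * (\<alpha>^2 * (norm d)^2) \<le> 1/2 * L' * \<alpha>^2 * (norm d)^2"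
  proof -
    have h: "0 \<le> \<alpha>^2 * (norm d)^2" by simp
    show ?thesis using mult_right_mono[OF LL h] by (simp add: field_simps)
  qed
  show "f (x + \<alpha> *\<^sub>R d) \<le> f x + \<alpha> * (g x \<bullet> d) + 1/2 * L' * \<alpha>^2 * (norm d)^2"
    using A B unfolding abs_le_iff by linarith
  show "\<forall>i. \<bar>c (x + \<alpha> *\<^sub>R d) $ i\<bar> \<le> \<bar>c x $ i + \<alpha> * ((J x *v d) $ i)\<bar> + 1/2 * \<Gamma> i * \<alpha>^2 * (norm d)^2"
  proof
    fix i
    have der: "\<forall>z\<in>X. ((\<lambda>z. c z $ i) has_derivative (\<lambda>h. (J z $ i) \<bullet> h)) (at z)"
      using c_deriv comp_deriv by blast
    have lip: "\<forall>z\<in>X. \<forall>w\<in>X. norm (J z $ i - J w $ i) \<le> \<gamma> i * norm (z - w)" using J_lip by blast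
    have e: "(J x $ i) \<bullet> (\<alpha> *\<^sub>R d) = \<alpha> * ((J x *v d) $ i)"
      by (simp add: matrix_vector_mul_component)
    have A: "\<bar>c (x + \<alpha> *\<^sub>R d) $ i - c x $ i - \<alpha> * ((J x *v d) $ i)\<bar> \<le> \<gamma> i/2 * (\<alpha>^2 * (norm d)^2)"
      using descent[OF conv der lip x xa] unfolding nh e .
    have B: "\<gamma> i/2 * (\<alpha>^2 * (norm d)^2) \<le> 1/2 * \<Gamma> i * \<alpha>^2 * (norm d)^2"
    proof -
      have h: "0 \<le> \<alpha>^2 * (norm d)^2" by simp
      show ?thesis using mult_right_mono[OF spec[OF G, of i] h] by (simp add: field_simps)
    qed
    show "\<bar>c (x + \<alpha> *\<^sub>R d) $ i\<bar> \<le> \<bar>c x $ i + \<alpha> * ((J x *v d) $ i)\<bar> + 1/2 * \<Gamma> i * \<alpha>^2 * (norm d)^2"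
      using A B unfolding abs_le_iff by linarith
  qed
qed

lemma alg2_lemma:
  fixes f :: "real^'n \<Rightarrow> real" and g :: "real^'n \<Rightarrow> real^'n"
    and c :: "real^'n \<Rightarrow> real^'m" and J :: "real^'n \<Rightarrow> real^'n^'m"
    and H :: "nat \<Rightarrow> real^'n^'n" and x d :: "nat \<Rightarrow> real^'n"
  assumes conv: "convex X"
    and f_deriv: "\<forall>z\<in>X. (f has_derivative (\<lambda>h. g z \<bullet> h)) (at z)"
    and g_lip: "\<forall>z\<in>X. \<forall>w\<in>X. norm (g z - g w) \<le> Lg * norm (z - w)"
    and c_deriv: "\<forall>z\<in>X. (c has_derivative (\<lambda>h. J z *v h)) (at z)"
    and J_lip: "\<forall>i. \<forall>z\<in>X. \<forall>w\<in>X. norm (J z $ i - J w $ i) \<le> \<gamma> i * norm (z - w)"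
    and L0: "Lg \<le> L0" "0 < L0" and G0: "\<forall>i. \<gamma> i \<le> \<gamma>0 i" "\<forall>i. 0 \<le> \<gamma>0 i"
    and xX: "\<forall>k. x k \<in> X" and \<tau>pos: "\<forall>k. 0 < \<tau> k" and \<tau>le: "\<forall>k. \<tau> k \<le> \<tau>init"
    and Jd: "\<forall>k. J (x k) *v d k = - c (x k)"
    and \<kappa>q: "0 < \<kappa>q" and dqk: "\<forall>k. \<kappa>q * (norm (d k))^2 \<le> model_red c (x k) (\<tau> k) (g (x k)) (H k) (d k)"
    and \<eta>: "0 < \<eta>" "\<eta> < 1"
    and \<nu>: "0 < \<nu>" "\<nu> < 1" and \<alpha>0: "0 < \<alpha>0"
    and alg: "alg2 f g c H x d \<tau> \<alpha> \<eta> \<nu> \<alpha>0"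
    and trial: "\<forall>k j. (\<forall>i < j. \<not> suff_dec f c \<eta> (\<tau> k) (x k) (g (x k)) (H k) (d k) (\<nu> ^ i * \<alpha>0))
                 \<longrightarrow> x k + (\<nu> ^ j * \<alpha>0) *\<^sub>R d k \<in> X"
  shows "\<exists>\<alpha>min>0. \<forall>k. \<alpha>min \<le> \<alpha> k \<and> suff_dec f c \<eta> (\<tau> k) (x k) (g (x k)) (H k) (d k) (\<alpha> k)"
proof -
  define \<Lambda>s where "\<Lambda>s = \<tau>init * L0 + (\<Sum>i\<in>UNIV. \<gamma>0 i)"
  have \<tau>i: "0 < \<tau>init" using \<tau>pos \<tau>le by (meson order_less_le_trans)
  have S0: "0 \<le> (\<Sum>i\<in>UNIV. \<gamma>0 i)" using G0 by (simp add: sum_nonneg)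
  have \<Lambda>s: "0 < \<Lambda>s" unfolding \<Lambda>s_def using \<tau>i L0 S0 by (simp add: add_pos_nonneg)
  define \<alpha>min where "\<alpha>min = min \<alpha>0 (\<nu> * min 1 (2 * (1 - \<eta>) * \<kappa>q / \<Lambda>s))"
  have \<alpha>min: "0 < \<alpha>min" unfolding \<alpha>min_def using \<alpha>0 \<nu> \<eta> \<kappa>q \<Lambda>s by simp
  have "\<forall>k. \<alpha>min \<le> \<alpha> k \<and> suff_dec f c \<eta> (\<tau> k) (x k) (g (x k)) (H k) (d k) (\<alpha> k)"
  proof
    fix k
    let ?SD = "\<lambda>a. suff_dec f c \<eta> (\<tau> k) (x k) (g (x k)) (H k) (d k) a"
    let ?dq = "model_red c (x k) (\<tau> k) (g (x k)) (H k) (d k)"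
    obtain j where j: "\<alpha> k = \<nu> ^ j * \<alpha>0" "?SD (\<nu> ^ j * \<alpha>0)" "\<forall>i < j. \<not> ?SD (\<nu> ^ i * \<alpha>0)"
      using alg unfolding alg2_def by blast
    have "\<alpha>min \<le> \<alpha> k"
    proof (cases j)
      case 0 thus ?thesis using j by (simp add: \<alpha>min_def)
    next
      case (Suc j')
      define t where "t = \<nu> ^ j' * \<alpha>0"
      have t0: "0 < t" using \<nu> \<alpha>0 by (simp add: t_def)
      have nSD: "\<not> ?SD t" using j(3) Suc by (simp add: t_def)
      have tX: "x k + t *\<^sub>R d k \<in> X" using trial j(3) Suc unfolding t_def by simp
      have tb: "min 1 (2 * (1 - \<eta>) * \<kappa>q / \<Lambda>s) < t"
      proof (rule ccontr)
        assume "\<not> ?thesis"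
        hence t1: "t \<le> 1" and t2: "t \<le> 2 * (1 - \<eta>) * \<kappa>q / \<Lambda>s" by auto
        have hb: "f (x k + t *\<^sub>R d k) \<le> f (x k) + t * (g (x k) \<bullet> d k) + 1/2 * L0 * t^2 * (norm (d k))^2"
          "\<forall>i. \<bar>c (x k + t *\<^sub>R d k) $ i\<bar> \<le> \<bar>c (x k) $ i + t * ((J (x k) *v d k) $ i)\<bar> + 1/2 * \<gamma>0 i * t^2 * (norm (d k))^2"
          using trial_bounds[OF conv f_deriv g_lip c_deriv J_lip spec[OF xX, of k] tX _ L0(1) G0(1)] t0 by auto
        have "(\<tau> k * L0 + (\<Sum>i\<in>UNIV. \<gamma>0 i)) * t * (norm (d k))^2 \<le> \<Lambda>s * t * (norm (d k))^2"
          unfolding \<Lambda>s_def using \<tau>le L0 t0 by (intro mult_right_mono) auto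
        also have "\<dots> \<le> (2 * (1 - \<eta>) * \<kappa>q) * (norm (d k))^2"
        proof -
          have "\<Lambda>s * t \<le> 2 * (1 - \<eta>) * \<kappa>q" using t2 \<Lambda>s by (simp add: field_simps)
          thus ?thesis by (intro mult_right_mono) auto
        qed
        also have "\<dots> \<le> 2 * (1 - \<eta>) * ?dq" using dqk \<eta> by (simp add: mult.assoc)
        finally have "?SD t"
          using sd_core[OF spec[OF \<tau>pos, of k] \<eta> t0 spec[OF Jd, of k] hb] t1 by blast
        thus False using nSD by simp
      qed
      have "\<alpha> k = \<nu> * t" using j(1) Suc by (simp add: t_def)
      moreover have "\<nu> * min 1 (2 * (1 - \<eta>) * \<kappa>q / \<Lambda>s) \<le> \<nu> * t" using tb \<nu> by simp
      ultimately show ?thesis by (simp add: \<alpha>min_def)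
    qed
    thus "\<alpha>min \<le> \<alpha> k \<and> ?SD (\<alpha> k)" using j by simp
  qed
  thus ?thesis using \<alpha>min by blast
qed


lemma alg1_lemma:
  fixes f :: "real^'n \<Rightarrow> real" and g :: "real^'n \<Rightarrow> real^'n"
    and c :: "real^'n \<Rightarrow> real^'m" and J :: "real^'n \<Rightarrow> real^'n^'m"
    and H :: "nat \<Rightarrow> real^'n^'n" and x d :: "nat \<Rightarrow> real^'n"
    and Lk :: "nat \<Rightarrow> nat \<Rightarrow> real" and Gk :: "nat \<Rightarrow> nat \<Rightarrow> 'm \<Rightarrow> real" and jk :: "nat \<Rightarrow> nat"
  assumes conv: "convex X"
    and f_deriv: "\<forall>z\<in>X. (f has_derivative (\<lambda>h. g z \<bullet> h)) (at z)"
    and g_lip: "\<forall>z\<in>X. \<forall>w\<in>X. norm (g z - g w) \<le> Lg * norm (z - w)"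
    and c_deriv: "\<forall>z\<in>X. (c has_derivative (\<lambda>h. J z *v h)) (at z)"
    and J_lip: "\<forall>i. \<forall>z\<in>X. \<forall>w\<in>X. norm (J z $ i - J w $ i) \<le> \<gamma> i * norm (z - w)"
    and L0: "Lg \<le> L0" "0 < L0" and G0: "\<forall>i. \<gamma> i \<le> \<gamma>0 i" "\<forall>i. 0 \<le> \<gamma>0 i"
    and xX: "\<forall>k. x k \<in> X" and \<tau>pos: "\<forall>k. 0 < \<tau> k" and \<tau>le: "\<forall>k. \<tau> k \<le> \<tau>init"
    and Jd: "\<forall>k. J (x k) *v d k = - c (x k)" and Dpos: "\<forall>k. 0 < norm (d k)"
    and \<kappa>q: "0 < \<kappa>q" and dqk: "\<forall>k. \<kappa>q * (norm (d k))^2 \<le> model_red c (x k) (\<tau> k) (g (x k)) (H k) (d k)"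
    and \<eta>: "0 < \<eta>" "\<eta> < 1"
    and \<rho>: "1 < \<rho>" and Li: "0 < Linit" and Gi: "\<forall>i. 0 < Ginit i"
    and alg: "alg1 f g c J H x d \<tau> \<alpha> \<eta> \<rho> Linit Ginit Lk Gk jk"
    and trial: "\<forall>k. \<forall>j \<le> jk k. x k + alg1_step \<eta> g c H x d \<tau> Lk Gk k j *\<^sub>R d k \<in> X"
  shows "\<exists>\<alpha>min>0. \<forall>k. \<alpha>min \<le> \<alpha> k \<and> suff_dec f c \<eta> (\<tau> k) (x k) (g (x k)) (H k) (d k) (\<alpha> k)"
proof -
  define Lmax where "Lmax = max Linit (\<rho> * L0)"
  define Gmax where "Gmax i = max (Ginit i) (\<rho> * \<gamma>0 i)" for i
  define \<Lambda>max where "\<Lambda>max = \<tau>init * Lmax + (\<Sum>i\<in>UNIV. Gmax i)"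
  have \<tau>i: "0 < \<tau>init" using \<tau>pos \<tau>le by (meson order_less_le_trans)
  have Lmax: "0 < Lmax" using Li by (simp add: Lmax_def)
  have Gmax: "\<forall>i. 0 < Gmax i" using Gi by (simp add: Gmax_def less_max_iff_disj)
  have \<Lambda>max: "0 < \<Lambda>max" unfolding \<Lambda>max_def using \<tau>i Lmax Gmax
    by (simp add: add_pos_pos sum_pos)
  let ?dq = "\<lambda>k. model_red c (x k) (\<tau> k) (g (x k)) (H k) (d k)"
  let ?l = "\<lambda>k. l1norm (c (x k))"
  let ?D = "\<lambda>k. norm (d k) ^ 2"
  let ?\<Lambda> = "\<lambda>k j. \<tau> k * Lk k j + (\<Sum>i\<in>UNIV. Gk k j i)"
  let ?a = "\<lambda>k j. alg1_step \<eta> g c H x d \<tau> Lk Gk k j"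
  let ?LF = "\<lambda>k j. f (x k + ?a k j *\<^sub>R d k) \<le> f (x k) + ?a k j * (g (x k) \<bullet> d k)
                         + 1/2 * Lk k j * (?a k j)^2 * (norm (d k))^2"
  let ?LC = "\<lambda>k j i. \<bar>c (x k + ?a k j *\<^sub>R d k) $ i\<bar> \<le> \<bar>c (x k) $ i + ?a k j * ((J (x k) *v d k) $ i)\<bar>
                         + 1/2 * Gk k j i * (?a k j)^2 * (norm (d k))^2"
  let ?SD = "\<lambda>k a. suff_dec f c \<eta> (\<tau> k) (x k) (g (x k)) (H k) (d k) a"
  have A: "\<forall>k. 0 < Lk k 0 \<and> Lk k 0 \<le> (if k = 0 then Linit else Lk (k - 1) (jk (k - 1)))
         \<and> (\<forall>i. 0 < Gk k 0 i \<and> Gk k 0 i \<le> (if k = 0 then Ginit i else Gk (k - 1) (jk (k - 1)) i))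
         \<and> (\<forall>j < jk k. \<not> (?SD k (?a k j) \<or> (?LF k j \<and> (\<forall>i. ?LC k j i)))
              \<and> Lk k (Suc j) = (if ?LF k j then Lk k j else \<rho> * Lk k j)
              \<and> (\<forall>i. Gk k (Suc j) i = (if ?LC k j i then Gk k j i else \<rho> * Gk k j i)))
         \<and> (?SD k (?a k (jk k)) \<or> (?LF k (jk k) \<and> (\<forall>i. ?LC k (jk k) i)))
         \<and> \<alpha> k = ?a k (jk k)"
    using alg unfolding alg1_def Let_def by blast
  have aeq: "?a k j = alg1_alpha \<eta> (?dq k) (?l k) (?\<Lambda> k j) (?D k)" for k j
    by (simp add: alg1_step_def)
  have l0: "0 \<le> ?l k" for k by (rule l1norm_nonneg)
  have D0: "0 < ?D k" for k using Dpos by simp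
  have apos: "0 < ?a k j" if "0 < ?\<Lambda> k j" for k j
  proof -
    have "0 < 2 * (1 - \<eta>) * ?dq k / (?\<Lambda> k j * ?D k)"
    proof -
      have "0 < \<kappa>q * ?D k" using \<kappa>q D0 by simp
      hence "0 < ?dq k" using dqk by (meson order_less_le_trans)
      thus ?thesis using \<eta> that D0 by simp
    qed
    hence "0 < min 1 (2 * (1 - \<eta>) * ?dq k / (?\<Lambda> k j * ?D k))" by simp
    also have "\<dots> \<le> ?a k j" unfolding aeq by (rule alg1_alpha_props(2)[OF that D0 l0])
    finally show ?thesis .
  qed
  have inner: "\<forall>j \<le> jk k. 0 < Lk k j \<and> Lk k j \<le> Lmax \<and> (\<forall>i. 0 < Gk k j i \<and> Gk k j i \<le> Gmax i)"
    if base: "0 < Lk k 0 \<and> Lk k 0 \<le> Lmax \<and> (\<forall>i. 0 < Gk k 0 i \<and> Gk k 0 i \<le> Gmax i)" for k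
  proof
    fix j show "j \<le> jk k \<longrightarrow> 0 < Lk k j \<and> Lk k j \<le> Lmax \<and> (\<forall>i. 0 < Gk k j i \<and> Gk k j i \<le> Gmax i)"
    proof (induction j)
      case 0 thus ?case using base by simp
    next
      case (Suc j)
      show ?case
      proof
        assume sj: "Suc j \<le> jk k"
        hence jl: "j < jk k" by simp
        have IH: "0 < Lk k j" "Lk k j \<le> Lmax" "\<forall>i. 0 < Gk k j i \<and> Gk k j i \<le> Gmax i"
          using Suc.IH jl by auto
        have \<Lambda>p: "0 < ?\<Lambda> k j" using IH \<tau>pos by (simp add: add_pos_pos sum_pos)
        have ap: "0 \<le> ?a k j" using apos[OF \<Lambda>p] by simp
        have tX: "x k + ?a k j *\<^sub>R d k \<in> X" using trial jl by simp
        have upd: "Lk k (Suc j) = (if ?LF k j then Lk k j else \<rho> * Lk k j)"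
          "\<forall>i. Gk k (Suc j) i = (if ?LC k j i then Gk k j i else \<rho> * Gk k j i)"
          using A jl by blast+
        have Lb: "0 < Lk k (Suc j) \<and> Lk k (Suc j) \<le> Lmax"
        proof (cases "?LF k j")
          case True thus ?thesis using upd IH by simp
        next
          case False
          have "Lk k j < Lg"
          proof (rule ccontr)
            assume "\<not> Lk k j < Lg"
            hence "Lg \<le> Lk k j" by simp
            from trial_bounds(1)[OF conv f_deriv g_lip c_deriv J_lip spec[OF xX, of k] tX ap this G0(1)]
            show False using False by simp
          qed
          hence "\<rho> * Lk k j \<le> \<rho> * L0" using L0 \<rho> by simp
          hence "\<rho> * Lk k j \<le> Lmax" by (simp add: Lmax_def)
          thus ?thesis using upd False IH \<rho> by simp
        qed
        have Gb: "\<forall>i. 0 < Gk k (Suc j) i \<and> Gk k (Suc j) i \<le> Gmax i"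
        proof
          fix i
          show "0 < Gk k (Suc j) i \<and> Gk k (Suc j) i \<le> Gmax i"
          proof (cases "?LC k j i")
            case True thus ?thesis using upd IH by simp
          next
            case False
            have "Gk k j i < \<gamma> i"
            proof (rule ccontr)
              assume "\<not> Gk k j i < \<gamma> i"
              hence GG: "\<forall>i'. \<gamma> i' \<le> (\<lambda>i'. if i' = i then Gk k j i else \<gamma> i') i'" by auto
              from spec[OF trial_bounds(2)[OF conv f_deriv g_lip c_deriv J_lip spec[OF xX, of k] tX ap order.refl GG], of i]
              have "?LC k j i" by simp
              thus False using False by simp
            qed
            hence "\<rho> * Gk k j i \<le> \<rho> * \<gamma>0 i" using G0 \<rho> by (smt (verit) mult_left_mono)
            hence "\<rho> * Gk k j i \<le> Gmax i" by (simp add: Gmax_def)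
            thus ?thesis using upd False IH \<rho> by simp
          qed
        qed
        show "0 < Lk k (Suc j) \<and> Lk k (Suc j) \<le> Lmax \<and> (\<forall>i. 0 < Gk k (Suc j) i \<and> Gk k (Suc j) i \<le> Gmax i)"
          using Lb Gb by blast
      qed
    qed
  qed
  have bnd: "\<forall>j \<le> jk k. 0 < Lk k j \<and> Lk k j \<le> Lmax \<and> (\<forall>i. 0 < Gk k j i \<and> Gk k j i \<le> Gmax i)" for k
  proof (induction k)
    case 0
    have "0 < Lk 0 0 \<and> Lk 0 0 \<le> Lmax \<and> (\<forall>i. 0 < Gk 0 0 i \<and> Gk 0 0 i \<le> Gmax i)"
      using A[rule_format, of 0] by (auto simp: Lmax_def Gmax_def le_max_iff_disj)
    thus ?case by (rule inner)
  next
    case (Suc k)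
    have "0 < Lk (Suc k) 0 \<and> Lk (Suc k) 0 \<le> Lmax \<and> (\<forall>i. 0 < Gk (Suc k) 0 i \<and> Gk (Suc k) 0 i \<le> Gmax i)"
      using A[rule_format, of "Suc k"] Suc.IH[rule_format, of "jk k"] by (auto intro: order_trans)
    thus ?case by (rule inner)
  qed
  define \<alpha>min where "\<alpha>min = min 1 (2 * (1 - \<eta>) * \<kappa>q / \<Lambda>max)"
  have \<alpha>min: "0 < \<alpha>min" unfolding \<alpha>min_def using \<eta> \<kappa>q \<Lambda>max by simp
  have "\<forall>k. \<alpha>min \<le> \<alpha> k \<and> ?SD k (\<alpha> k)"
  proof
    fix k
    define j where "j = jk k"
    have b: "0 < Lk k j" "Lk k j \<le> Lmax" "\<forall>i. 0 < Gk k j i \<and> Gk k j i \<le> Gmax i"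
      using bnd[of k] by (auto simp: j_def)
    have \<Lambda>p: "0 < ?\<Lambda> k j" using b \<tau>pos by (simp add: add_pos_pos sum_pos)
    have \<Lambda>le: "?\<Lambda> k j \<le> \<Lambda>max"
    proof -
      have "\<tau> k * Lk k j \<le> \<tau>init * Lmax" using \<tau>pos \<tau>le b \<tau>i by (intro mult_mono) (auto simp: less_imp_le)
      moreover have "(\<Sum>i\<in>UNIV. Gk k j i) \<le> (\<Sum>i\<in>UNIV. Gmax i)" using b by (intro sum_mono) auto
      ultimately show ?thesis by (simp add: \<Lambda>max_def)
    qed
    have ak: "\<alpha> k = ?a k j" using A j_def by blast
    have ap: "0 < ?a k j" by (rule apos[OF \<Lambda>p])
    have acc: "?SD k (?a k j) \<or> (?LF k j \<and> (\<forall>i. ?LC k j i))" using A j_def by blast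
    have sd: "?SD k (?a k j)"
    proof (cases "?SD k (?a k j)")
      case False
      hence h: "?LF k j" "\<forall>i. ?LC k j i" using acc by auto
      have cond: "(?a k j \<le> 1 \<and> ?\<Lambda> k j * ?a k j * ?D k \<le> 2 * (1 - \<eta>) * ?dq k)
          \<or> (1 < ?a k j \<and> ?\<Lambda> k j * ?a k j * ?D k = 2 * (1 - \<eta>) * ?dq k - 4 * ?l k)"
        unfolding aeq by (rule alg1_alpha_props(1)[OF \<Lambda>p D0 l0])
      show ?thesis by (rule sd_core[OF spec[OF \<tau>pos, of k] \<eta> ap spec[OF Jd, of k] h cond])
    qed simp
    have "\<alpha>min \<le> ?a k j"
    proof -
      have "2 * (1 - \<eta>) * \<kappa>q / \<Lambda>max \<le> 2 * (1 - \<eta>) * ?dq k / (?\<Lambda> k j * ?D k)"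
      proof -
        have "2 * (1 - \<eta>) * \<kappa>q / \<Lambda>max \<le> 2 * (1 - \<eta>) * \<kappa>q / ?\<Lambda> k j"
          using \<Lambda>le \<Lambda>p \<eta> \<kappa>q by (intro divide_left_mono) auto
        also have "\<dots> = 2 * (1 - \<eta>) * (\<kappa>q * ?D k) / (?\<Lambda> k j * ?D k)"
          using D0 by simp
        also have "\<dots> \<le> 2 * (1 - \<eta>) * ?dq k / (?\<Lambda> k j * ?D k)"
          using dqk \<eta> \<Lambda>p D0 by (intro divide_right_mono mult_left_mono) auto
        finally show ?thesis .
      qed
      hence "\<alpha>min \<le> min 1 (2 * (1 - \<eta>) * ?dq k / (?\<Lambda> k j * ?D k))"
        unfolding \<alpha>min_def by (simp add: min_le_iff_disj)
      also have "\<dots> \<le> ?a k j" unfolding aeq by (rule alg1_alpha_props(2)[OF \<Lambda>p D0 l0])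
      finally show ?thesis .
    qed
    thus "\<alpha>min \<le> \<alpha> k \<and> ?SD k (\<alpha> k)" using sd ak by simp
  qed
  thus ?thesis using \<alpha>min by blast
qed

theorem theorem2p18:
  fixes f :: "real^'n \<Rightarrow> real" and g :: "real^'n \<Rightarrow> real^'n"
    and c :: "real^'n \<Rightarrow> real^'m" and J :: "real^'n \<Rightarrow> real^'n^'m"
    and H :: "nat \<Rightarrow> real^'n^'n" and x d :: "nat \<Rightarrow> real^'n" and y :: "nat \<Rightarrow> real^'m"
    and \<tau> \<alpha> :: "nat \<Rightarrow> real" and X :: "(real^'n) set"
    and \<tau>init \<epsilon> \<sigma> \<eta> :: real
    and \<rho> Linit :: real and Ginit :: "'m \<Rightarrow> real"
    and Lk :: "nat \<Rightarrow> nat \<Rightarrow> real" and Gk :: "nat \<Rightarrow> nat \<Rightarrow> 'm \<Rightarrow> real" and jk :: "nat \<Rightarrow> nat"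
    and \<nu> \<alpha>0 :: real
  assumes params: "0 < \<tau>init" "0 < \<epsilon>" "\<epsilon> < 1" "0 < \<sigma>" "\<sigma> < 1" "0 < \<eta>" "\<eta> < 1"
    and X_open: "open X" and X_convex: "convex X"
    and iterates_in_X: "\<forall>k. x k \<in> X"
    and f_deriv: "\<forall>z\<in>X. (f has_derivative (\<lambda>h. g z \<bullet> h)) (at z)"
    and g_cont: "continuous_on X g"
    and f_bdd_below: "bdd_below (f ` X)"
    and g_bounded: "bounded (g ` X)"
    and g_lipschitz: "\<exists>L. \<forall>z\<in>X. \<forall>w\<in>X. norm (g z - g w) \<le> L * norm (z - w)"
    and c_deriv: "\<forall>z\<in>X. (c has_derivative (\<lambda>h. J z *v h)) (at z)"
    and c_bounded: "bounded (c ` X)"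
    and J_bounded: "bounded (J ` X)"
    and J_rows_lipschitz: "\<exists>\<gamma>::'m \<Rightarrow> real. \<forall>i. \<forall>z\<in>X. \<forall>w\<in>X.
                             norm (J z $ i - J w $ i) \<le> \<gamma> i * norm (z - w)"
    and J_sing_vals: "\<exists>\<kappa>>0. \<forall>z\<in>X. sing_vals_ge \<kappa> (J z)"
    and matrix_assm: "\<exists>\<kappa>H \<zeta>. 0 < \<kappa>H \<and> 0 < \<zeta> \<and>
         (\<forall>k. transpose (H k) = H k \<and> onorm (\<lambda>v. H k *v v) \<le> \<kappa>H
              \<and> (\<forall>u. J (x k) *v u = 0 \<longrightarrow> \<zeta> * (norm u)^2 \<le> u \<bullet> (H k *v u)))"
    and common: "sqp_common g c J H x d y \<tau> \<alpha> \<tau>init \<epsilon> \<sigma>"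
    and algorithm:
      "(1 < \<rho> \<and> 0 < Linit \<and> (\<forall>i. 0 < Ginit i)
         \<and> alg1 f g c J H x d \<tau> \<alpha> \<eta> \<rho> Linit Ginit Lk Gk jk
         \<and> (\<forall>k. \<forall>j \<le> jk k. x k + alg1_step \<eta> g c H x d \<tau> Lk Gk k j *\<^sub>R d k \<in> X))
       \<or> (0 < \<nu> \<and> \<nu> < 1 \<and> 0 < \<alpha>0
         \<and> alg2 f g c H x d \<tau> \<alpha> \<eta> \<nu> \<alpha>0
         \<and> (\<forall>k j. (\<forall>i < j. \<not> suff_dec f c \<eta> (\<tau> k) (x k) (g (x k)) (H k) (d k) (\<nu> ^ i * \<alpha>0))
                 \<longrightarrow> x k + (\<nu> ^ j * \<alpha>0) *\<^sub>R d k \<in> X))"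
  shows "(\<lambda>k. norm (d k)) \<longlonglongrightarrow> 0
       \<and> (\<lambda>k. norm (c (x k))) \<longlonglongrightarrow> 0
       \<and> (\<lambda>k. norm (g (x k) + transpose (J (x k)) *v y k)) \<longlonglongrightarrow> 0"
proof -
  note \<epsilon> = params(2,3) and \<sigma> = params(4,5) and \<eta> = params(6,7)
  obtain \<kappa>J where \<kappa>J: "0 < \<kappa>J" "\<forall>z\<in>X. sing_vals_ge \<kappa>J (J z)" using J_sing_vals by blast
  obtain \<kappa>H \<zeta> where \<kappa>H: "0 < \<kappa>H" and \<zeta>: "0 < \<zeta>"
    and Hk: "\<forall>k. transpose (H k) = H k \<and> onorm (\<lambda>v. H k *v v) \<le> \<kappa>H
              \<and> (\<forall>u. J (x k) *v u = 0 \<longrightarrow> \<zeta> * (norm u)^2 \<le> u \<bullet> (H k *v u))"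
    using matrix_assm by blast
  have Hon: "\<And>k. onorm (\<lambda>v. H k *v v) \<le> \<kappa>H" using Hk by blast
  have Hz: "\<And>k. \<forall>u. J (x k) *v u = 0 \<longrightarrow> \<zeta> * (norm u)^2 \<le> u \<bullet> (H k *v u)" using Hk by blast
  obtain Lg where Lg: "\<forall>z\<in>X. \<forall>w\<in>X. norm (g z - g w) \<le> Lg * norm (z - w)" using g_lipschitz by blast
  obtain \<gamma> :: "'m \<Rightarrow> real" where \<gamma>: "\<forall>i. \<forall>z\<in>X. \<forall>w\<in>X. norm (J z $ i - J w $ i) \<le> \<gamma> i * norm (z - w)"
    using J_rows_lipschitz by blast
  define L0 where "L0 = max Lg 0 + 1"
  have L0: "Lg \<le> L0" "0 < L0" by (auto simp: L0_def max_def)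
  define \<gamma>0 where "\<gamma>0 i = max (\<gamma> i) 0" for i
  have G0: "\<forall>i. \<gamma> i \<le> \<gamma>0 i" "\<forall>i. 0 \<le> \<gamma>0 i" by (simp_all add: \<gamma>0_def)
  obtain Bg where Bg: "\<forall>z\<in>X. norm (g z) \<le> Bg" using g_bounded unfolding bounded_iff by blast
  obtain Bc where Bc: "\<forall>z\<in>X. norm (c z) \<le> Bc" using c_bounded unfolding bounded_iff by blast
  obtain flow where flow: "\<forall>z\<in>X. flow \<le> f z" using f_bdd_below unfolding bdd_below_def by auto
  have cm1: "\<And>k. H k *v d k + transpose (J (x k)) *v y k = - g (x k)"
    and cm2: "\<And>k. J (x k) *v d k = - c (x k)"
    and cm3: "\<And>k. \<not> (g (x k) + transpose (J (x k)) *v y k = 0 \<and> c (x k) = 0)"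
    and cm4: "\<And>k. \<tau> k = tau_update \<epsilon> \<sigma> (if k = 0 then \<tau>init else \<tau> (k - 1))
                   (l1norm (c (x k))) (g (x k) \<bullet> d k) (d k \<bullet> (H k *v d k))"
    and cm5: "\<And>k. 0 < \<alpha> k"
    and cm6: "\<And>k. x (Suc k) = x k + \<alpha> k *\<^sub>R d k"
    using common unfolding sqp_common_def by blast+
  have xk: "\<And>k. x k \<in> X" using iterates_in_X by blast
  have Bc0: "0 \<le> Bc" using Bc xk[of 0] norm_ge_zero order_trans by blast
  have gB: "\<And>k. norm (g (x k)) \<le> Bg" using Bg xk by blast
  have cB: "\<And>k. norm (c (x k)) \<le> Bc" using Bc xk by blast
  have Bg0: "0 \<le> Bg" using gB[of 0] norm_ge_zero order_trans by blast
  define Bd where "Bd = (Bg + \<kappa>H * (Bc/\<kappa>J))/\<zeta> + Bc/\<kappa>J"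
  define Cn where "Cn = (\<kappa>H^2/\<zeta> + \<kappa>H) * (Bc/\<kappa>J^2)"
  define C4 where "C4 = (4/\<zeta>*(2*\<kappa>H^2/\<zeta> + \<kappa>H) + 2) * (Bc/\<kappa>J^2)"
  have LA: "norm (d k) \<le> Bd \<and> - (d k \<bullet> (H k *v d k)) \<le> Cn * norm (c (x k))
     \<and> (norm (d k))^2 \<le> 4/\<zeta> * max (d k \<bullet> (H k *v d k)) 0 + C4 * norm (c (x k))" for k
    using linalg[OF \<kappa>J(1) \<kappa>J(2)[rule_format, OF xk[of k]] \<kappa>H Hon[of k] \<zeta> Hz[of k] cm1[of k] cm2[of k] gB[of k] cB[of k]]
    unfolding Bd_def Cn_def C4_def by blast
  have Cn0: "0 \<le> Cn" unfolding Cn_def using \<kappa>H \<zeta> Bc0 by (intro mult_nonneg_nonneg add_nonneg_nonneg) auto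
  have C40: "0 \<le> C4" unfolding C4_def using \<kappa>H \<zeta> Bc0 by (intro mult_nonneg_nonneg add_nonneg_nonneg) auto
  define By where "By = (Bg + \<kappa>H * Bd)/\<kappa>J"
  have yB: "norm (y k) \<le> By" for k
  proof -
    have e: "transpose (J (x k)) *v y k = - g (x k) - H k *v d k"
      using cm1[of k] by (metis add_diff_cancel_left')
    have "\<kappa>J * norm (y k) \<le> norm (transpose (J (x k)) *v y k)"
      using \<kappa>J(2) xk[of k] unfolding sing_vals_ge_def by blast
    also have "\<dots> \<le> norm (g (x k)) + norm (H k *v d k)" unfolding e
      by (metis norm_minus_cancel norm_triangle_ineq4)
    also have "\<dots> \<le> Bg + \<kappa>H * Bd"
    proof -
      have "norm (H k *v d k) \<le> \<kappa>H * norm (d k)" by (rule Hbound[OF Hon])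
      also have "\<dots> \<le> \<kappa>H * Bd" using LA[of k] \<kappa>H by (intro mult_left_mono) auto
      finally show ?thesis using gB[of k] by linarith
    qed
    finally show ?thesis using \<kappa>J(1) by (simp add: By_def field_simps)
  qed
  have By0: "0 \<le> By" using yB[of 0] norm_ge_zero order_trans by blast
  define C\<tau> where "C\<tau> = By + Cn + 1"
  have C\<tau>: "0 < C\<tau>" using By0 Cn0 by (simp add: C\<tau>_def)
  have l0: "\<And>k. 0 \<le> l1norm (c (x k))" by (rule l1norm_nonneg)
  have cl: "\<And>k. norm (c (x k)) \<le> l1norm (c (x k))" by (rule norm_le_l1norm)
  have den: "g (x k) \<bullet> d k + max (d k \<bullet> (H k *v d k)) 0 \<le> C\<tau> * l1norm (c (x k))" for k
  proof -
    have "g (x k) = - (H k *v d k + transpose (J (x k)) *v y k)" using cm1[of k] by simp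
    hence "g (x k) \<bullet> d k = - ((H k *v d k) \<bullet> d k) - (transpose (J (x k)) *v y k) \<bullet> d k"
      by (simp add: inner_add_left inner_diff_left)
    also have "(transpose (J (x k)) *v y k) \<bullet> d k = - (y k \<bullet> c (x k))"
      by (simp only: tr_inner cm2 inner_minus_right)
    finally have gd: "g (x k) \<bullet> d k = - (d k \<bullet> (H k *v d k)) + y k \<bullet> c (x k)"
      by (simp add: inner_commute)
    have yc: "y k \<bullet> c (x k) \<le> By * norm (c (x k))"
    proof -
      have "y k \<bullet> c (x k) \<le> norm (y k) * norm (c (x k))" by (rule norm_cauchy_schwarz)
      also have "\<dots> \<le> By * norm (c (x k))" using yB[of k] by (intro mult_right_mono) auto
      finally show ?thesis .
    qed
    have "g (x k) \<bullet> d k + max (d k \<bullet> (H k *v d k)) 0 \<le> (By + Cn) * norm (c (x k))"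
    proof -
      have c0: "0 \<le> Cn * norm (c (x k))" using Cn0 by simp
      have nh: "- (d k \<bullet> (H k *v d k)) \<le> Cn * norm (c (x k))" using LA[of k] by blast
      have "g (x k) \<bullet> d k + max (d k \<bullet> (H k *v d k)) 0 \<le> By * norm (c (x k)) + Cn * norm (c (x k))"
        unfolding gd max_def using yc nh c0 by auto
      thus ?thesis by (simp add: distrib_right)
    qed
    also have "\<dots> \<le> (By + Cn) * l1norm (c (x k))" using cl[of k] By0 Cn0 by (intro mult_left_mono) auto
    also have "\<dots> \<le> C\<tau> * l1norm (c (x k))" using l0[of k] by (intro mult_right_mono) (auto simp: C\<tau>_def)
    finally show ?thesis .
  qed
  define \<tau>min where "\<tau>min = min \<tau>init ((1 - \<epsilon>) * (1 - \<sigma>) / C\<tau>)"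
  have \<tau>min: "0 < \<tau>min" unfolding \<tau>min_def using params C\<tau> by simp
  have tp: "\<tau>min \<le> \<tau> k \<and> \<tau> k \<le> \<tau>init" for k
  proof (induction k)
    case 0
    have "0 < \<tau>init" using params by simp
    from tau_props[OF \<epsilon> \<sigma> this l0[of 0] C\<tau> den[of 0]] show ?case
      using cm4[of 0] by (simp add: \<tau>min_def)
  next
    case (Suc k)
    have "0 < \<tau> k" using Suc.IH \<tau>min by simp
    from tau_props[OF \<epsilon> \<sigma> this l0[of "Suc k"] C\<tau> den[of "Suc k"]]
    have "\<tau> (Suc k) \<le> \<tau> k" "min (\<tau> k) ((1 - \<epsilon>) * (1 - \<sigma>) / C\<tau>) \<le> \<tau> (Suc k)"
      using cm4[of "Suc k"] by simp_all
    thus ?case using Suc.IH unfolding \<tau>min_def by (auto simp: min_le_iff_disj)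
  qed
  have \<tau>pos: "\<forall>k. 0 < \<tau> k" using tp \<tau>min by (meson order_less_le_trans)
  have \<tau>le: "\<forall>k. \<tau> k \<le> \<tau>init" using tp by blast
  have prevpos: "0 < (if k = 0 then \<tau>init else \<tau> (k - 1))" for k
    using params \<tau>pos by simp
  have \<tau>mono: "\<tau> (Suc k) \<le> \<tau> k" for k
    using tau_props(1)[OF \<epsilon> \<sigma> prevpos[of "Suc k"] l0[of "Suc k"] C\<tau> den[of "Suc k"]] cm4[of "Suc k"] by simp
  have \<tau>den: "\<tau> k * (g (x k) \<bullet> d k + max (d k \<bullet> (H k *v d k)) 0) \<le> (1 - \<sigma>) * l1norm (c (x k))" for k
    using tau_props(3)[OF \<epsilon> \<sigma> prevpos[of k] l0[of k] C\<tau> den[of k]] cm4[of k] by simp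
  let ?dq = "\<lambda>k. model_red c (x k) (\<tau> k) (g (x k)) (H k) (d k)"
  have dqlow: "\<sigma> * l1norm (c (x k)) + 1/2 * \<tau> k * max (d k \<bullet> (H k *v d k)) 0 \<le> ?dq k" for k
  proof -
    have e: "?dq k = - (\<tau> k * (g (x k) \<bullet> d k + max (d k \<bullet> (H k *v d k)) 0)) + 1/2 * \<tau> k * max (d k \<bullet> (H k *v d k)) 0 + l1norm (c (x k))"
      by (simp add: model_red_def algebra_simps)
    show ?thesis unfolding e using \<tau>den[of k] by (simp add: algebra_simps)
  qed
  define \<kappa>q where "\<kappa>q = min (\<sigma> / (C4 + 1)) (\<tau>min * \<zeta> / 8)"
  have \<kappa>q: "0 < \<kappa>q" unfolding \<kappa>q_def using \<sigma> C40 \<tau>min \<zeta> by simp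
  have dqk: "\<forall>k. \<kappa>q * (norm (d k))^2 \<le> ?dq k"
  proof
    fix k
    define M where "M = max (d k \<bullet> (H k *v d k)) 0"
    have M0: "0 \<le> M" by (simp add: M_def)
    have "\<kappa>q * (norm (d k))^2 \<le> \<kappa>q * (4/\<zeta> * M + C4 * norm (c (x k)))"
      using LA[of k] \<kappa>q by (intro mult_left_mono) (auto simp: M_def)
    also have "\<dots> = (\<kappa>q * 4/\<zeta>) * M + (\<kappa>q * C4) * norm (c (x k))" by (simp add: algebra_simps)
    also have "\<dots> \<le> (1/2 * \<tau> k) * M + \<sigma> * l1norm (c (x k))"
    proof (intro add_mono mult_right_mono M0)
      have "\<kappa>q \<le> \<tau>min * \<zeta> / 8" unfolding \<kappa>q_def by (rule min.cobounded2)
      hence "\<kappa>q * 4 / \<zeta> \<le> \<tau>min / 2" using \<zeta> by (simp add: field_simps)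
      thus "\<kappa>q * 4 / \<zeta> \<le> 1/2 * \<tau> k" using tp[of k] by simp
      have "\<kappa>q \<le> \<sigma> / (C4 + 1)" unfolding \<kappa>q_def by (rule min.cobounded1)
      hence "\<kappa>q * C4 \<le> \<sigma> / (C4 + 1) * C4" using C40 by (intro mult_right_mono) auto
      also have "\<dots> \<le> \<sigma>" using C40 \<sigma> by (simp add: field_simps)
      finally have "\<kappa>q * C4 * norm (c (x k)) \<le> \<sigma> * norm (c (x k))" by (intro mult_right_mono) auto
      also have "\<dots> \<le> \<sigma> * l1norm (c (x k))" using cl[of k] \<sigma> by (intro mult_left_mono) auto
      finally show "\<kappa>q * C4 * norm (c (x k)) \<le> \<sigma> * l1norm (c (x k))" .
    qed
    also have "\<dots> \<le> ?dq k" using dqlow[of k] by (simp add: M_def algebra_simps)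
    finally show "\<kappa>q * (norm (d k))^2 \<le> ?dq k" .
  qed
  have dqc: "\<sigma> * norm (c (x k)) \<le> ?dq k" for k
  proof -
    have "0 \<le> 1/2 * \<tau> k * max (d k \<bullet> (H k *v d k)) 0" using \<tau>pos[rule_format, of k] by simp
    moreover have "\<sigma> * norm (c (x k)) \<le> \<sigma> * l1norm (c (x k))" using cl[of k] \<sigma> by (intro mult_left_mono) auto
    ultimately show ?thesis using dqlow[of k] by linarith
  qed
  have dq0: "0 \<le> ?dq k" for k using dqc[of k] \<sigma> by (smt (verit) mult_nonneg_nonneg norm_ge_zero)
  have Dpos: "\<forall>k. 0 < norm (d k)"
  proof
    fix k show "0 < norm (d k)"
    proof (rule ccontr)
      assume "\<not> 0 < norm (d k)"
      hence d0: "d k = 0" by simp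
      have "c (x k) = 0" using cm2[of k] d0 by simp
      moreover have "g (x k) + transpose (J (x k)) *v y k = 0" using cm1[of k] d0
        by (metis add.commute add.left_neutral add_eq_0_iff matrix_vector_mult_0_right)
      ultimately show False using cm3[of k] by blast
    qed
  qed
  have Jd: "\<forall>k. J (x k) *v d k = - c (x k)" using cm2 by blast
  have xX: "\<forall>k. x k \<in> X" using xk by blast
  obtain \<alpha>min where \<alpha>min: "0 < \<alpha>min" and sd: "\<forall>k. \<alpha>min \<le> \<alpha> k \<and> suff_dec f c \<eta> (\<tau> k) (x k) (g (x k)) (H k) (d k) (\<alpha> k)"
  proof -
    from algorithm show ?thesis
    proof
      assume a: "1 < \<rho> \<and> 0 < Linit \<and> (\<forall>i. 0 < Ginit i)
         \<and> alg1 f g c J H x d \<tau> \<alpha> \<eta> \<rho> Linit Ginit Lk Gk jk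
         \<and> (\<forall>k. \<forall>j \<le> jk k. x k + alg1_step \<eta> g c H x d \<tau> Lk Gk k j *\<^sub>R d k \<in> X)"
      show ?thesis
        using alg1_lemma[OF X_convex f_deriv Lg c_deriv \<gamma> L0 G0 xX \<tau>pos \<tau>le Jd Dpos \<kappa>q dqk \<eta>, of \<rho> Linit Ginit \<alpha> Lk Gk jk] a that
        by blast
    next
      assume a: "0 < \<nu> \<and> \<nu> < 1 \<and> 0 < \<alpha>0
         \<and> alg2 f g c H x d \<tau> \<alpha> \<eta> \<nu> \<alpha>0
         \<and> (\<forall>k j. (\<forall>i < j. \<not> suff_dec f c \<eta> (\<tau> k) (x k) (g (x k)) (H k) (d k) (\<nu> ^ i * \<alpha>0))
                 \<longrightarrow> x k + (\<nu> ^ j * \<alpha>0) *\<^sub>R d k \<in> X)"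
      show ?thesis
        using alg2_lemma[OF X_convex f_deriv Lg c_deriv \<gamma> L0 G0 xX \<tau>pos \<tau>le Jd \<kappa>q dqk \<eta>, of \<nu> \<alpha>0 \<alpha>] a that
        by blast
    qed
  qed
  define \<psi> where "\<psi> k = \<tau> k * (f (x k) - flow) + l1norm (c (x k))" for k
  have fl: "0 \<le> f (x k) - flow" for k using flow xk[of k] by auto
  have \<psi>0: "0 \<le> \<psi> k" for k unfolding \<psi>_def using \<tau>pos[rule_format, of k] fl[of k] l0[of k] by (simp add: add_nonneg_nonneg)
  have step: "\<psi> (Suc k) + \<eta> * \<alpha>min * ?dq k \<le> \<psi> k" for k
  proof -
    have "\<tau> (Suc k) * (f (x (Suc k)) - flow) \<le> \<tau> k * (f (x (Suc k)) - flow)"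
      using \<tau>mono[of k] fl[of "Suc k"] by (intro mult_right_mono) auto
    hence "\<psi> (Suc k) \<le> merit f c (\<tau> k) (x k + \<alpha> k *\<^sub>R d k) - \<tau> k * flow"
      unfolding \<psi>_def merit_def cm6 by (simp add: algebra_simps)
    also have "\<dots> \<le> merit f c (\<tau> k) (x k) - \<eta> * \<alpha> k * ?dq k - \<tau> k * flow"
      using sd unfolding suff_dec_def by auto
    also have "\<dots> = \<psi> k - \<eta> * \<alpha> k * ?dq k" unfolding \<psi>_def merit_def by (simp add: algebra_simps)
    also have "\<dots> \<le> \<psi> k - \<eta> * \<alpha>min * ?dq k"
    proof -
      have "\<eta> * \<alpha>min * ?dq k \<le> \<eta> * \<alpha> k * ?dq k"
        using sd \<eta> dq0[of k] by (intro mult_right_mono mult_left_mono) auto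
      thus ?thesis by simp
    qed
    finally show ?thesis by simp
  qed
  have sumb: "(\<Sum>i<n. \<eta> * \<alpha>min * ?dq i) \<le> \<psi> 0 - \<psi> n" for n
  proof (induction n)
    case 0 thus ?case by simp
  next
    case (Suc n) thus ?case using step[of n] by simp
  qed
  have ea: "0 < \<eta> * \<alpha>min" using \<eta> \<alpha>min by simp
  have summ: "summable ?dq"
  proof (rule summableI_nonneg_bounded[where x = "\<psi> 0 / (\<eta> * \<alpha>min)"])
    show "0 \<le> ?dq n" for n by (rule dq0)
    fix n
    have "(\<eta> * \<alpha>min) * (\<Sum>i<n. ?dq i) \<le> \<psi> 0"
      using sumb[of n] \<psi>0[of n] by (simp add: sum_distrib_left)
    thus "(\<Sum>i<n. ?dq i) \<le> \<psi> 0 / (\<eta> * \<alpha>min)" using ea by (simp add: field_simps)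
  qed
  hence dqlim: "?dq \<longlonglongrightarrow> 0" by (rule summable_LIMSEQ_zero)
  have sq: "\<And>a b :: nat \<Rightarrow> real. (\<And>k. 0 \<le> a k) \<Longrightarrow> (\<And>k. a k \<le> b k) \<Longrightarrow> b \<longlonglongrightarrow> 0 \<Longrightarrow> a \<longlonglongrightarrow> 0"
    by (rule tendsto_sandwich[OF _ _ tendsto_const]) auto
  have dlim: "(\<lambda>k. norm (d k)) \<longlonglongrightarrow> 0"
  proof (rule sq)
    show "0 \<le> norm (d k)" for k by simp
    show "norm (d k) \<le> sqrt (?dq k / \<kappa>q)" for k
    proof -
      have "(norm (d k))^2 \<le> ?dq k / \<kappa>q" using dqk \<kappa>q by (simp add: field_simps mult.commute)
      hence "sqrt ((norm (d k))^2) \<le> sqrt (?dq k / \<kappa>q)" by (rule real_sqrt_le_mono)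
      thus ?thesis by simp
    qed
    show "(\<lambda>k. sqrt (?dq k / \<kappa>q)) \<longlonglongrightarrow> 0"
      using tendsto_real_sqrt[OF tendsto_divide[OF dqlim tendsto_const[of \<kappa>q]]] \<kappa>q by simp
  qed
  have clim: "(\<lambda>k. norm (c (x k))) \<longlonglongrightarrow> 0"
  proof (rule sq)
    show "0 \<le> norm (c (x k))" for k by simp
    show "norm (c (x k)) \<le> ?dq k / \<sigma>" for k using dqc[of k] \<sigma> by (simp add: field_simps mult.commute)
    show "(\<lambda>k. ?dq k / \<sigma>) \<longlonglongrightarrow> 0"
      using tendsto_divide[OF dqlim tendsto_const[of \<sigma>]] \<sigma> by simp
  qed
  have rlim: "(\<lambda>k. norm (g (x k) + transpose (J (x k)) *v y k)) \<longlonglongrightarrow> 0"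
  proof (rule sq)
    show "0 \<le> norm (g (x k) + transpose (J (x k)) *v y k)" for k by simp
    show "norm (g (x k) + transpose (J (x k)) *v y k) \<le> \<kappa>H * norm (d k)" for k
    proof -
      have "g (x k) + transpose (J (x k)) *v y k = - (H k *v d k)"
        using cm1[of k] by (metis add.commute add_diff_cancel_left' diff_conv_add_uminus minus_add_distrib minus_minus)
      hence "norm (g (x k) + transpose (J (x k)) *v y k) = norm (H k *v d k)" by simp
      also have "\<dots> \<le> \<kappa>H * norm (d k)" by (rule Hbound[OF Hon])
      finally show ?thesis .
    qed
    show "(\<lambda>k. \<kappa>H * norm (d k)) \<longlonglongrightarrow> 0"
      using tendsto_mult[OF tendsto_const[of \<kappa>H] dlim] by simp
  qed
  show ?thesis using dlim clim rlim by blast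
qed

end
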